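(* For every rational $m$ with $0<m<1$ there are infinitely many pairwise non-congruent hyperbolic Heron triangles having a right angle and whose area $A$ satisfies $\cos A=\frac{1-m^2}{1+m^2}$, $\sin A=\frac{2m}{1+m^2}$.
   Context: All triangles are non-degenerate, bounded triangles in the hyperbolic plane (curvature $-1$), with side lengths $a,b,c>0$, opposite angles $\alpha,\beta,\gamma>0$, and area $A=\pi-\alpha-\beta-\gamma$. A hyperbolic Heron triangle is one with $e^a,e^b,e^c\in\mathbb{Q}$ and $e^{i\alpha},e^{i\beta},e^{i\gamma},e^{iA}\in\mathbb{Q}[i]$. *)

theory Defs
  imports Complex_Main
begin

text \<open>A (non-degenerate, bounded) hyperbolic triangle is determined up to congruence by its
side lengths a, b, c; such a triangle exists iff the sides are positive and satisfy the
strict triangle inequalities.  Curvature -1.\<close>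

definition hyp_triangle :: "real \<Rightarrow> real \<Rightarrow> real \<Rightarrow> bool" where
  "hyp_triangle a b c \<longleftrightarrow> a > 0 \<and> b > 0 \<and> c > 0 \<and> a < b + c \<and> b < a + c \<and> c < a + b"

text \<open>Angle opposite the side a (hyperbolic law of cosines).\<close>
definition hyp_angle :: "real \<Rightarrow> real \<Rightarrow> real \<Rightarrow> real" where
  "hyp_angle a b c = arccos ((cosh b * cosh c - cosh a) / (sinh b * sinh c))"

definition hyp_area :: "real \<Rightarrow> real \<Rightarrow> real \<Rightarrow> real" where
  "hyp_area a b c = pi - hyp_angle a b c - hyp_angle b c a - hyp_angle c a b"

definition gauss_rat :: "complex \<Rightarrow> bool" where
  "gauss_rat z \<longleftrightarrow> Re z \<in> \<rat> \<and> Im z \<in> \<rat>"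

definition hyp_heron :: "real \<Rightarrow> real \<Rightarrow> real \<Rightarrow> bool" where
  "hyp_heron a b c \<longleftrightarrow> hyp_triangle a b c \<and>
     exp a \<in> \<rat> \<and> exp b \<in> \<rat> \<and> exp c \<in> \<rat> \<and>
     gauss_rat (cis (hyp_angle a b c)) \<and> gauss_rat (cis (hyp_angle b c a)) \<and>
     gauss_rat (cis (hyp_angle c a b)) \<and> gauss_rat (cis (hyp_area a b c))"

definition has_right_angle :: "real \<Rightarrow> real \<Rightarrow> real \<Rightarrow> bool" where
  "has_right_angle a b c \<longleftrightarrow>
     hyp_angle a b c = pi / 2 \<or> hyp_angle b c a = pi / 2 \<or> hyp_angle c a b = pi / 2"

text \<open>Congruence of triangles (SSS): same multiset of side lengths.\<close>
definition hyp_congruent :: "real \<times> real \<times> real \<Rightarrow> real \<times> real \<times> real \<Rightarrow> bool" where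
  "hyp_congruent t u \<longleftrightarrow> (case t of (a, b, c) \<Rightarrow> case u of (a', b', c') \<Rightarrow>
     (a', b', c') \<in> {(a,b,c), (a,c,b), (b,a,c), (b,c,a), (c,a,b), (c,b,a)})"

end

theory Submission
  imports Defs
begin


definition v2 :: "real \<Rightarrow> int \<Rightarrow> bool" where
  "v2 x e \<longleftrightarrow> (\<exists>a b::int. odd a \<and> odd b \<and> x = 2 powi e * a / b)"


lemma odd_pow_eq: 
  fixes a b c d :: int and j :: nat
  assumes "odd a" "odd d" "j > 0" "a * d = 2^j * c * b" shows False
proof -
  have "even (2^j * c * b)" using assms(3) by simp
  moreover have "odd (a * d)" using assms(1,2) by simp
  ultimately show False using assms(4) by metis
qed

lemma oddnz: "odd (b::int) \<Longrightarrow> (of_int b::real) \<noteq> 0"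
  by (metis even_zero of_int_eq_0_iff)

lemma v2_nonzero: "v2 x e \<Longrightarrow> x \<noteq> 0"
  unfolding v2_def using oddnz by auto

lemma pow2split: "e < f \<Longrightarrow> (2::real) powi f = 2 powi e * 2 ^ nat (f - e)"
proof -
  assume "e < f"
  hence "f = e + int (nat (f-e))" by simp
  hence "(2::real) powi f = 2 powi (e + int (nat (f-e)))" by simp
  also have "\<dots> = 2 powi e * 2 powi int (nat (f-e))" by (rule power_int_add) simp
  finally show ?thesis by (simp only: power_int_of_nat)
qed

lemma v2_unique_aux:
  assumes "v2 x e" "v2 x f" "e < f" shows False
proof -
  obtain a b where ab: "odd a" "odd b" "x = 2 powi e * a / b" using assms(1) v2_def by auto
  obtain c d where cd: "odd c" "odd d" "x = 2 powi f * c / d" using assms(2) v2_def by auto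
  have b0: "(b::real) \<noteq> 0" "(d::real) \<noteq> 0" using ab cd by (auto simp: oddnz)
  have f: "(2::real) powi f = 2 powi e * 2 ^ nat (f - e)"
    using assms(3) by (rule pow2split)
  have 1: "x * b * d = 2 powi e * a * d" using ab(3) b0 by simp
  have 2: "x * b * d = 2 powi e * (2 ^ nat (f - e) * c * b)" using cd(3) b0 f by simp
  have "(2::real) powi e * (of_int a * of_int d) = 2 powi e * a * d" by (simp only: mult.assoc)
  also have "\<dots> = 2 powi e * (2 ^ nat (f - e) * c * b)" using 1 2 by simp
  finally have 3: "(2::real) powi e * (of_int a * of_int d) = 2 powi e * (2 ^ nat (f - e) * c * b)" .
  have "(2::real) powi e \<noteq> 0" by simp
  hence "(a::real) * d = 2 ^ nat (f - e) * c * b" using 3 mult_left_cancel by blast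
  hence "real_of_int (a * d) = real_of_int (2 ^ nat (f - e) * c * b)" by simp
  hence "a * d = 2 ^ nat (f - e) * c * b" by (rule of_int_eq_iff[THEN iffD1])
  thus False using odd_pow_eq[of a d "nat (f-e)" c b] ab cd assms(3) by simp
qed

lemma v2_unique: "v2 x e \<Longrightarrow> v2 x f \<Longrightarrow> e = f"
  using v2_unique_aux linorder_neq_iff by metis

lemma pow2add: "(2::real) powi (e + f) = 2 powi e * 2 powi f"
  by (rule power_int_add) simp

lemma pow2diff: "(2::real) powi (e - f) = 2 powi e / 2 powi f"
  by (rule power_int_diff) simp

lemma v2_mult: assumes "v2 x e" "v2 y f" shows "v2 (x * y) (e + f)"
proof -
  obtain a b where ab: "odd a" "odd b" "x = 2 powi e * a / b" using assms(1) v2_def by auto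
  obtain c d where cd: "odd c" "odd d" "y = 2 powi f * c / d" using assms(2) v2_def by auto
  have "x * y = 2 powi (e + f) * of_int (a * c) / of_int (b * d)"
    unfolding pow2add ab(3) cd(3) by simp
  moreover have "odd (a * c)" "odd (b * d)" using ab cd by auto
  ultimately show ?thesis unfolding v2_def by blast
qed

lemma v2_divide: assumes "v2 x e" "v2 y f" shows "v2 (x / y) (e - f)"
proof -
  obtain a b where ab: "odd a" "odd b" "x = 2 powi e * a / b" using assms(1) v2_def by auto
  obtain c d where cd: "odd c" "odd d" "y = 2 powi f * c / d" using assms(2) v2_def by auto
  have nz: "(c::real) \<noteq> 0" "(d::real) \<noteq> 0" "(b::real) \<noteq> 0" using ab cd by (auto simp: oddnz)
  have p: "(2::real) powi f \<noteq> 0" by simp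
  have "x / y = (2 powi e / 2 powi f) * (of_int a * of_int d) / (of_int b * of_int c)"
    unfolding ab(3) cd(3) using nz p by (simp add: divide_simps)
  hence "x / y = 2 powi (e - f) * of_int (a * d) / of_int (b * c)"
    unfolding pow2diff by simp
  moreover have "odd (a * d)" "odd (b * c)" using ab cd by auto
  ultimately show ?thesis unfolding v2_def by blast
qed

lemma v2_add_less: assumes "v2 x e" "v2 y f" "e < f" shows "v2 (x + y) e"
proof -
  obtain a b where ab: "odd a" "odd b" "x = 2 powi e * a / b" using assms(1) v2_def by auto
  obtain c d where cd: "odd c" "odd d" "y = 2 powi f * c / d" using assms(2) v2_def by auto
  have nz: "(d::real) \<noteq> 0" "(b::real) \<noteq> 0" using ab cd by (auto simp: oddnz)
  have f: "(2::real) powi f = 2 powi e * 2 ^ nat (f - e)"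
    using assms(3) by (rule pow2split)
  have "x + y = 2 powi e * (of_int a * of_int d + 2 ^ nat (f - e) * of_int c * of_int b) / (of_int b * of_int d)"
    unfolding ab(3) cd(3) f using nz by (simp add: divide_simps) (simp add: algebra_simps)
  hence "x + y = 2 powi e * of_int (a * d + 2 ^ nat (f - e) * c * b) / of_int (b * d)"
    by simp
  moreover have "odd (a * d + 2 ^ nat (f - e) * c * b)" using ab cd assms(3) by simp
  moreover have "odd (b * d)" using ab cd by simp
  ultimately show ?thesis unfolding v2_def by blast
qed

lemma v2_odd: "odd a \<Longrightarrow> v2 (of_int a) 0"
  unfolding v2_def by (rule exI[of _ a], rule exI[of _ 1]) auto

lemma v2_two_pow: "odd a \<Longrightarrow> v2 (2 ^ k * of_int a) (int k)"
  unfolding v2_def by (rule exI[of _ a], rule exI[of _ 1]) auto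

lemma v2_minus: assumes "v2 x e" shows "v2 (- x) e"
proof -
  obtain a b where ab: "odd a" "odd b" "x = 2 powi e * a / b" using assms(1) v2_def by auto
  have "- x = 2 powi e * of_int (- a) / of_int b" using ab(3) by simp
  moreover have "odd (-a)" using ab by simp
  ultimately show ?thesis unfolding v2_def using ab(2) by blast
qed

lemma int_odd_decomp: "(z::int) \<noteq> 0 \<Longrightarrow> \<exists>k w. odd w \<and> z = 2 ^ k * w"
proof (induction "nat \<bar>z\<bar>" arbitrary: z rule: less_induct)
  case less
  show ?case
  proof (cases "odd z")
    case True then show ?thesis by (rule_tac x=0 in exI) auto
  next
    case False
    then obtain z' where z': "z = 2 * z'" by auto
    with less.prems have "z' \<noteq> 0" by auto
    moreover have "nat \<bar>z'\<bar> < nat \<bar>z\<bar>" using z' \<open>z' \<noteq> 0\<close> by auto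
    ultimately obtain k w where "odd w" "z' = 2 ^ k * w" using less.hyps by blast
    thus ?thesis using z' by (rule_tac x="Suc k" in exI) auto
  qed
qed

lemma v2_int_exists: "(z::int) \<noteq> 0 \<Longrightarrow> \<exists>e\<ge>0. v2 (of_int z) e"
proof -
  assume "z \<noteq> 0"
  then obtain k w where "odd w" "z = 2 ^ k * w" using int_odd_decomp by blast
  thus ?thesis using v2_two_pow[of w k] by (rule_tac x="int k" in exI) auto
qed


definition onC :: "real \<Rightarrow> real \<Rightarrow> real \<Rightarrow> real \<Rightarrow> bool" where
  "onC a b x y \<longleftrightarrow> y^2 = x^3 + a*x^2 + b*x"

lemma chord:
  assumes c1: "onC a b x1 y1" and c2: "onC a b x2 y2" and ne: "x1 \<noteq> x2"
  and l: "l = (y2 - y1)/(x2 - x1)" and nu: "nu = y1 - l*x1" and x3: "x3 = l^2 - a - x1 - x2"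
  shows "x1*x2*x3 = nu^2" "onC a b x3 (-(l*x3 + nu))"
proof -
  have ne': "x2 - x1 \<noteq> 0" using ne by simp
  have ly: "l * (x2 - x1) = y2 - y1" using l ne' by simp
  have e1: "y1 = l*x1 + nu" using nu by simp
  have e2: "y2 = l*x2 + nu" using ly nu by (simp add: algebra_simps)
  have F1: "x1^3 + a*x1^2 + b*x1 - (l*x1+nu)^2 = 0" using c1 e1 unfolding onC_def by simp
  have F2: "x2^3 + a*x2^2 + b*x2 - (l*x2+nu)^2 = 0" using c2 e2 unfolding onC_def by simp
  define H where "H = x1^2+x1*x2+x2^2 + a*(x1+x2) + b - l^2*(x1+x2) - 2*l*nu"
  have "(x1 - x2) * H = (x1^3 + a*x1^2 + b*x1 - (l*x1+nu)^2) - (x2^3 + a*x2^2 + b*x2 - (l*x2+nu)^2)"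
    unfolding H_def by algebra
  hence "(x1 - x2) * H = 0" using F1 F2 by simp
  hence H0: "H = 0" using ne by simp
  have "nu^2 - x1*x2*x3 = x1 * H - (x1^3 + a*x1^2 + b*x1 - (l*x1+nu)^2)"
    unfolding H_def x3 by algebra
  thus "x1*x2*x3 = nu^2" using H0 F1 by simp
  hence N: "nu^2 = x1*x2*x3" by simp
  have "(x3^3 + a*x3^2 + b*x3 - (l*x3+nu)^2) = x3 * H + (x1*x2*x3 - nu^2)"
    unfolding H_def x3 by algebra
  hence "(x3^3 + a*x3^2 + b*x3 - (l*x3+nu)^2) = 0" using H0 N by simp
  thus "onC a b x3 (-(l*x3 + nu))" unfolding onC_def by (simp add: power2_eq_square algebra_simps)
qed

lemma dbl:
  assumes c: "onC 0 (-(n^2)) x y" and y0: "y \<noteq> 0"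
  and l: "l = (3*x^2 - n^2)/(2*y)" and x3: "x3 = l^2 - 2*x" and y3: "y3 = l*(x - x3) - y"
  shows "x3 = ((x^2+n^2)/(2*y))^2" "x3 - n = ((x^2 - 2*n*x - n^2)/(2*y))^2"
        "x3 + n = ((x^2 + 2*n*x - n^2)/(2*y))^2" "onC 0 (-(n^2)) x3 y3"
proof -
  have Y: "y^2 = x^3 - n^2*x" using c unfolding onC_def by simp
  have a: "x3 = ((3*x^2-n^2)^2 - 8*x*y^2)/(4*y^2)" unfolding x3 l using y0
    by (simp add: field_simps power2_eq_square)
  have b: "(3*x^2-n^2)^2 - 8*x*y^2 = (x^2+n^2)^2" unfolding Y by algebra
  show X3: "x3 = ((x^2+n^2)/(2*y))^2" unfolding a b by (simp add: power_divide power_mult_distrib)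
  have "x3 - n = ((x^2+n^2)^2 - 4*n*y^2)/(4*y^2)" unfolding X3 using y0
    by (simp add: field_simps power2_eq_square)
  also have "(x^2+n^2)^2 - 4*n*y^2 = (x^2 - 2*n*x - n^2)^2" unfolding Y by algebra
  finally show "x3 - n = ((x^2 - 2*n*x - n^2)/(2*y))^2" by (simp add: power_divide power_mult_distrib)
  have "x3 + n = ((x^2+n^2)^2 + 4*n*y^2)/(4*y^2)" unfolding X3 using y0
    by (simp add: field_simps power2_eq_square)
  also have "(x^2+n^2)^2 + 4*n*y^2 = (x^2 + 2*n*x - n^2)^2" unfolding Y by algebra
  finally show "x3 + n = ((x^2 + 2*n*x - n^2)/(2*y))^2" by (simp add: power_divide power_mult_distrib)
  define L where "L = 3*x^2 - n^2"
  define N where "N = (x^2+n^2)^2"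
  have X3': "x3 = N/(4*y^2)" unfolding X3 N_def by (simp add: power_divide power_mult_distrib)
  have Y3: "y3 = (L*(4*y^2*x - N) - 8*y^4)/(8*y^3)" unfolding y3 X3' l L_def using y0
    by (simp add: field_simps power2_eq_square power3_eq_cube eval_nat_numeral)
  have id: "(L*(4*y^2*x - N) - 8*y^4)^2 = N^3 - 16*n^2*N*y^4"
  proof -
    have "y^4 = (y^2)^2" by simp
    thus ?thesis unfolding L_def N_def Y by algebra
  qed
  have "y3^2 = (L*(4*y^2*x - N) - 8*y^4)^2/(64*y^6)" unfolding Y3 by (simp add: power_divide power_mult_distrib)
  also have "\<dots> = (N^3 - 16*n^2*N*y^4)/(64*y^6)" unfolding id ..
  also have "\<dots> = x3^3 - n^2*x3" unfolding X3' using y0 by (simp add: field_simps)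
  finally show "onC 0 (-(n^2)) x3 y3" unfolding onC_def by simp
qed


lemma v2i_mult: "v2 (of_int z) e \<Longrightarrow> v2 (of_int w) f \<Longrightarrow> v2 (of_int (z*w)) (e+f)"
  using v2_mult by fastforce

lemma v2i_pow2: "v2 (of_int z) e \<Longrightarrow> v2 (of_int (z^2)) (2*e)"
  using v2i_mult[of z e z e] by (simp add: power2_eq_square)

lemma v2_4: "v2 4 2" using v2_two_pow[of 1 2] by simp
lemma v2_8: "v2 8 3" using v2_two_pow[of 1 3] by simp
lemma v2_1: "v2 1 0" using v2_odd[of 1] by simp

lemma odd_sq: "odd (a::int) \<Longrightarrow> \<exists>u. a^2 = 4*u + 1"
proof -
  assume "odd a" then obtain s where "a = 2*s+1" by (meson oddE)
  thus ?thesis by (rule_tac x="s^2+s" in exI) (simp add: power2_eq_square algebra_simps)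
qed

lemma even_val: "even (a::int) \<Longrightarrow> a \<noteq> 0 \<Longrightarrow> \<exists>s>0. v2 (of_int a) s"
proof -
  assume a: "even a" "a \<noteq> 0"
  then obtain k w where kw: "odd w" "a = 2^k * w" using int_odd_decomp by blast
  have "k \<noteq> 0" using a kw by (auto)
  moreover have "v2 (of_int a) (int k)" using v2_two_pow[of w k] kw by simp
  ultimately show ?thesis by (rule_tac x="int k" in exI) simp
qed

lemma xi1_val:
  fixes A B :: int assumes A: "0 < A" "A < B" and cop: "coprime A B"
  shows "\<exists>e<0. v2 (of_int ((B^4+6*A^2*B^2+A^4)^2) / of_int (8*A*B*(A^2+B^2)*(B^2-A^2)^2)) e"
proof -
  define N where "N = B^4+6*A^2*B^2+A^4"
  have B2: "B^2 - A^2 \<noteq> 0"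
  proof -
    have "A^2 < B^2" using A by (simp add: power_strict_mono)
    thus ?thesis by simp
  qed
  show ?thesis
  proof (cases "even A")
    case True
    then have oB: "odd B" using cop by (metis coprime_common_divisor dvd_refl even_numeral odd_one dvd_mult_right numeral_Bit0_eq_double)
    obtain s where s: "s > 0" "v2 (of_int A) s" using even_val[OF True] A by auto
    have "odd N" unfolding N_def using True oB by simp
    hence vN: "v2 (of_int (N^2)) 0" using v2i_pow2[OF v2_odd] by fastforce
    have vB: "v2 (of_int B) 0" using v2_odd[OF oB] .
    have v3: "v2 (of_int (A^2+B^2)) 0" using True oB by (intro v2_odd) simp
    have v4: "v2 (of_int ((B^2-A^2)^2)) 0" using True oB by (intro v2i_pow2[of _ 0, simplified] v2_odd) simp
    have "v2 (of_int (8*A*B*(A^2+B^2)*(B^2-A^2)^2)) (3 + s + 0 + 0 + 0)"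
      by (intro v2i_mult s(2) vB v3 v4) (use v2_8 in simp)
    from v2_divide[OF vN this] show ?thesis using s N_def by (rule_tac x="0 - (3 + s + 0 + 0 + 0)" in exI) auto
  next
    case oA: False
    show ?thesis
    proof (cases "even B")
      case True
      obtain s where s: "s > 0" "v2 (of_int B) s" using even_val[OF True] A by auto
      have "odd N" unfolding N_def using True oA by simp
      hence vN: "v2 (of_int (N^2)) 0" using v2i_pow2[OF v2_odd] by fastforce
      have vA: "v2 (of_int A) 0" using v2_odd oA by blast
      have v3: "v2 (of_int (A^2+B^2)) 0" using True oA by (intro v2_odd) simp
      have v4: "v2 (of_int ((B^2-A^2)^2)) 0" using True oA by (intro v2i_pow2[of _ 0, simplified] v2_odd) simp
      have "v2 (of_int (8*A*B*(A^2+B^2)*(B^2-A^2)^2)) (3 + 0 + s + 0 + 0)"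
        by (intro v2i_mult s(2) vA v3 v4) (use v2_8 in simp)
      from v2_divide[OF vN this] show ?thesis using s N_def by (rule_tac x="0 - (3 + 0 + s + 0 + 0)" in exI) auto
    next
      case oB: False
      obtain u where u: "A^2 = 4*u+1" using odd_sq oA by blast
      obtain u' where u': "B^2 = 4*u'+1" using odd_sq oB by blast
      have "N = 8*(1 + 2*u'^2 + 4*u' + 12*u*u' + 4*u + 2*u^2)"
      proof -
        have "N = (B^2)^2 + 6*A^2*B^2 + (A^2)^2" unfolding N_def by algebra
        thus ?thesis unfolding u u' by algebra
      qed
      hence "v2 (of_int N) 3" using v2_two_pow[of "1 + 2*u'^2 + 4*u' + 12*u*u' + 4*u + 2*u^2" 3] by simp
      hence vN: "v2 (of_int (N^2)) 6" using v2i_pow2 by fastforce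
      have vA: "v2 (of_int A) 0" using v2_odd oA by blast
      have vB: "v2 (of_int B) 0" using v2_odd oB by blast
      have "A^2+B^2 = 2^1 * (2*u+2*u'+1)" using u u' by simp
      hence v3: "v2 (of_int (A^2+B^2)) 1" using v2_two_pow[of "2*u+2*u'+1" 1] by simp
      have d: "B^2-A^2 = 4*(u'-u)" using u u' by simp
      hence "u' - u \<noteq> 0" using B2 by simp
      then obtain j k where jk: "odd k" "u' - u = 2^j * k" using int_odd_decomp by blast
      have "B^2-A^2 = 2^(j+2) * k" using d jk by (simp add: power_add)
      hence "v2 (of_int (B^2-A^2)) (int (j+2))" using v2_two_pow[of k "j+2"] jk by simp
      hence v4: "v2 (of_int ((B^2-A^2)^2)) (2 * int (j+2))" using v2i_pow2 by blast
      have "v2 (of_int (8*A*B*(A^2+B^2)*(B^2-A^2)^2)) (3 + 0 + 0 + 1 + 2 * int (j+2))"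
        by (intro v2i_mult vA vB v3 v4) (use v2_8 in simp)
      from v2_divide[OF vN this] show ?thesis using N_def by (rule_tac x="6 - (3 + 0 + 0 + 1 + 2 * int (j+2))" in exI) auto
    qed
  qed
qed


definition dblp :: "real \<Rightarrow> real \<times> real \<Rightarrow> real \<times> real" where
  "dblp n p = (let x = fst p; y = snd p; l = (3*x^2 - n^2)/(2*y); x3 = l^2 - 2*x in (x3, l*(x - x3) - y))"

definition sqr :: "real \<Rightarrow> bool" where "sqr t \<longleftrightarrow> (\<exists>r\<in>\<rat>. t = r^2)"

lemma dblp_props:
  assumes c: "onC 0 (-(n^2)) x y" and y0: "y \<noteq> 0" and Q: "x \<in> \<rat>" "y \<in> \<rat>" "n \<in> \<rat>"
  shows "onC 0 (-(n^2)) (fst (dblp n (x,y))) (snd (dblp n (x,y)))"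
    "fst (dblp n (x,y)) \<in> \<rat>" "snd (dblp n (x,y)) \<in> \<rat>"
    "sqr (fst (dblp n (x,y)))" "sqr (fst (dblp n (x,y)) - n)" "sqr (fst (dblp n (x,y)) + n)"
    "fst (dblp n (x,y)) = ((x^2+n^2)/(2*y))^2"
proof -
  define l where "l = (3*x^2 - n^2)/(2*y)"
  define x3 where "x3 = l^2 - 2*x"
  define y3 where "y3 = l*(x - x3) - y"
  have d: "dblp n (x,y) = (x3, y3)" unfolding dblp_def l_def x3_def y3_def Let_def by simp
  note D = dbl[OF c y0 l_def x3_def y3_def]
  show "onC 0 (-(n^2)) (fst (dblp n (x,y))) (snd (dblp n (x,y)))" using D d by simp
  have lQ: "l \<in> \<rat>" unfolding l_def using Q by (intro Rats_divide Rats_diff Rats_mult Rats_power) auto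
  have x3Q: "x3 \<in> \<rat>" unfolding x3_def using Q lQ by (intro Rats_diff Rats_mult Rats_power) auto
  show "fst (dblp n (x,y)) \<in> \<rat>" using d x3Q by simp
  show "snd (dblp n (x,y)) \<in> \<rat>" using d x3Q lQ Q unfolding y3_def by (simp add: Rats_diff Rats_mult)
  show "sqr (fst (dblp n (x,y)))" unfolding sqr_def using d D(1) Q
    by (intro bexI[of _ "(x^2+n^2)/(2*y)"]) (auto intro!: Rats_divide Rats_add Rats_mult Rats_power)
  show "sqr (fst (dblp n (x,y)) - n)" unfolding sqr_def using d D(2) Q
    by (intro bexI[of _ "(x^2 - 2*n*x - n^2)/(2*y)"]) (auto intro!: Rats_divide Rats_diff Rats_mult Rats_power)
  show "sqr (fst (dblp n (x,y)) + n)" unfolding sqr_def using d D(3) Q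
    by (intro bexI[of _ "(x^2 + 2*n*x - n^2)/(2*y)"]) (auto intro!: Rats_divide Rats_diff Rats_add Rats_mult Rats_power)
  show "fst (dblp n (x,y)) = ((x^2+n^2)/(2*y))^2" using d D(1) by simp
qed

lemma xi_step: assumes "v2 \<xi> e" "e < 0" shows "v2 ((\<xi>^2+1)^2/(4*\<xi>*(\<xi>^2-1))) (e-2)"
proof -
  have s: "v2 (\<xi>^2) (2*e)" using v2_mult[OF assms(1) assms(1)] by (simp add: power2_eq_square)
  have a: "v2 (\<xi>^2+1) (2*e)" using v2_add_less[OF s v2_1] assms by simp
  have b: "v2 (\<xi>^2+(-1)) (2*e)" using v2_add_less[OF s v2_minus[OF v2_1]] assms by simp
  have a2: "v2 ((\<xi>^2+1)^2) (4*e)" using v2_mult[OF a a] by (simp add: power2_eq_square)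
  have d: "v2 (4*\<xi>*(\<xi>^2-1)) (2 + e + 2*e)" using v2_mult[OF v2_mult[OF v2_4 assms(1)] b] by simp
  show ?thesis using v2_divide[OF a2 d] by simp
qed

lemma dbl_xi:
  assumes c: "onC 0 (-(n^2)) x y" and y0: "y \<noteq> 0" and n0: "n \<noteq> 0"
  shows "((x^2+n^2)/(2*y))^2 / n = ((x/n)^2+1)^2/(4*(x/n)*((x/n)^2-1))"
proof -
  have Y: "y^2 = x*(x^2-n^2)" using c unfolding onC_def by (simp add: algebra_simps power2_eq_square power3_eq_cube)
  have x0: "x \<noteq> 0" "x^2 - n^2 \<noteq> 0" using Y y0 by auto
  have "((x^2+n^2)/(2*y))^2 / n = (x^2+n^2)^2/(4*y^2*n)" by (simp add: power_divide power_mult_distrib)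
  also have "\<dots> = (x^2+n^2)^2/(4*x*(x^2-n^2)*n)" unfolding Y by (simp add: algebra_simps)
  also have "\<dots> = ((x/n)^2+1)^2/(4*(x/n)*((x/n)^2-1))"
  proof -
    have e1: "((x/n)^2+1)^2 = (x^2+n^2)^2/n^4" using n0 by (simp add: field_simps power2_eq_square eval_nat_numeral)
    have e2: "4*(x/n)*((x/n)^2-1) = 4*x*(x^2-n^2)/n^3" using n0 by (simp add: field_simps power2_eq_square power3_eq_cube)
    have n3: "n^3 \<noteq> 0" "n^4 \<noteq> 0" using n0 by auto
    have "(x^2+n^2)^2/n^4 / (4*x*(x^2-n^2)/n^3) = (x^2+n^2)^2/(4*x*(x^2-n^2)) * (n^3/n^4)"
      by (simp add: divide_simps)
    also have "n^3/n^4 = 1/n" using n0 by (simp add: eval_nat_numeral)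
    finally show ?thesis unfolding e1 e2 by simp
  qed
  finally show ?thesis .
qed


lemma y_nz: assumes "onC 0 (-(n^2)) x y" "v2 (x/n) e" "e \<noteq> 0" "n \<noteq> 0" shows "y \<noteq> 0"
proof
  assume "y = 0"
  hence "x^3 - n^2*x = 0" using assms(1) unfolding onC_def by simp
  moreover have "x * (x - n) * (x + n) = x^3 - n^2*x" by algebra
  ultimately have "x * (x - n) * (x + n) = 0" by simp
  hence "x = 0 \<or> x = n \<or> x = -n" by auto
  hence "x/n = 0 \<or> x/n = 1 \<or> x/n = -1" using assms(4) by auto
  moreover have "x/n \<noteq> 0" using v2_nonzero[OF assms(2)] .
  moreover have "x/n \<noteq> 1" using v2_unique[OF assms(2)] v2_1 assms(3) by metis
  moreover have "x/n \<noteq> -1" using v2_unique[OF assms(2)] v2_minus[OF v2_1] assms(3) by metis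
  ultimately show False by blast
qed

lemma gen_frac: "b > 0 \<Longrightarrow> a > 0 \<Longrightarrow> S \<noteq> 0 \<Longrightarrow> D \<noteq> 0 \<Longrightarrow>
  (N/b^4)^2/(8*(a/b)*(S/b^2)*(D/b^2)^2) = N^2/(8*a*b*S*(D::real)^2)"
  by (simp add: power_divide field_simps eval_nat_numeral)

locale mset = fixes m :: real assumes mQ: "m \<in> \<rat>" and m0: "0 < m" and m1: "m < 1"
begin

definition "k = 1 + m^2"
definition "n = 2*m*k"
definition "P0 = (k^2, k^2*(1 - m^2))"
definition "g j = (dblp n ^^ j) (dblp n P0)"

lemma k_pos: "k > 0" unfolding k_def by (simp add: add_pos_nonneg)
lemma n_pos: "n > 0" unfolding n_def using k_pos m0 by simp
lemma kQ: "k \<in> \<rat>" unfolding k_def using mQ by simp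
lemma nQ: "n \<in> \<rat>" unfolding n_def using mQ kQ by simp

lemma P0_on: "onC 0 (-(n^2)) (fst P0) (snd P0)"
proof -
  have "(k^2*(1 - m^2))^2 = (k^2)^3 - n^2 * k^2"
  proof -
    have "k^2 - 4*m^2 = (1 - m^2)^2" unfolding k_def by algebra
    hence "k^4 * (k^2 - 4*m^2) = k^4 * (1-m^2)^2" by simp
    thus ?thesis unfolding n_def by algebra
  qed
  thus ?thesis unfolding onC_def P0_def by simp
qed

lemma m2_lt: "m^2 < 1"
proof -
  have "m*m < 1*1" using m0 m1 by (intro mult_strict_mono) auto
  thus ?thesis by (simp add: power2_eq_square)
qed

lemma P0_y: "snd P0 \<noteq> 0"
proof -
  have "m^2 < 1" by (rule m2_lt)
  thus ?thesis unfolding P0_def using k_pos by simp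
qed

lemma P0Q: "fst P0 \<in> \<rat>" "snd P0 \<in> \<rat>" unfolding P0_def using kQ mQ by auto

lemma Q1_x: "fst (dblp n P0) = ((1 + 6*m^2 + m^4)/(2*(1-m^2)))^2"
proof -
  have "fst (dblp n P0) = (((fst P0)^2 + n^2)/(2*snd P0))^2"
    using dblp_props(7)[OF P0_on[unfolded prod.collapse] P0_y P0Q nQ] by simp
  also have "((fst P0)^2 + n^2)/(2*snd P0) = (1 + 6*m^2 + m^4)/(2*(1-m^2))"
  proof -
    have m2: "1 - m^2 \<noteq> 0" using m2_lt by simp
    have "(fst P0)^2 + n^2 = k^2 * (1 + 6*m^2 + m^4)" unfolding P0_def n_def k_def by simp algebra
    moreover have "2*snd P0 = k^2 * (2*(1-m^2))" unfolding P0_def by simp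
    ultimately show ?thesis using k_pos by simp
  qed
  finally show ?thesis .
qed

lemma e1_ex: "\<exists>e<0. v2 (fst (dblp n P0) / n) e"
proof -
  obtain A B where AB: "B > 0" "coprime A B" "m = of_int A / of_int B" using Rats_cases'[OF mQ] by blast
  have Bp: "(of_int B::real) > 0" using AB by simp
  have Ap: "A > 0" using m0 AB Bp by (simp add: zero_less_divide_iff)
  have AB1: "A < B" using m1 AB Bp by simp
  obtain e where e: "e < 0" "v2 (of_int ((B^4+6*A^2*B^2+A^4)^2) / of_int (8*A*B*(A^2+B^2)*(B^2-A^2)^2)) e"
    using xi1_val[OF Ap AB1 AB(2)] by blast
  define a where "a = (of_int A :: real)"
  define b where "b = (of_int B :: real)"
  have b0: "b > 0" "a > 0" "a < b" using Bp Ap AB1 unfolding a_def b_def by auto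
  have mm: "m = a / b" using AB unfolding a_def b_def by simp
  have "fst (dblp n P0) / n = (1 + 6*m^2 + m^4)^2/(8*m*(1+m^2)*(1-m^2)^2)"
  proof -
    have m2: "1 - m^2 \<noteq> 0" using m2_lt by simp
    show ?thesis unfolding Q1_x unfolding n_def k_def using m2 m0
      by (simp add: power_divide power_mult_distrib field_simps) (rule disjI2, algebra)
  qed
  also have "\<dots> = (b^4+6*a^2*b^2+a^4)^2 / (8*a*b*(a^2+b^2)*(b^2-a^2)^2)"
  proof -
    have ba: "b^2 - a^2 \<noteq> 0" using b0 by (smt (verit) power_strict_mono zero_le_numeral power2_eq_square mult_strict_mono)
    have s: "a^2+b^2 \<noteq> 0" using b0 by (smt (verit) zero_less_power)
    have e1: "1 + 6*m^2 + m^4 = (b^4+6*a^2*b^2+a^4)/b^4" unfolding mm using b0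
      by (simp add: power_divide field_simps eval_nat_numeral)
    have e2: "1 + m^2 = (a^2+b^2)/b^2" unfolding mm using b0 by (simp add: power_divide field_simps)
    have e3: "1 - m^2 = (b^2-a^2)/b^2" unfolding mm using b0 by (simp add: power_divide field_simps)
    show ?thesis unfolding e1 e2 e3 unfolding mm using gen_frac[OF b0(1) b0(2) s ba] by simp

  qed
  also have "\<dots> = of_int ((B^4+6*A^2*B^2+A^4)^2) / of_int (8*A*B*(A^2+B^2)*(B^2-A^2)^2)"
    unfolding a_def b_def by simp
  finally show ?thesis using e by auto
qed

definition "e1 = (SOME e. e < 0 \<and> v2 (fst (dblp n P0) / n) e)"

lemma e1: "e1 < 0" "v2 (fst (dblp n P0)/n) e1"
proof -
  have "e1 < 0 \<and> v2 (fst (dblp n P0) / n) e1" unfolding e1_def using someI_ex[OF e1_ex] .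
  thus "e1 < 0" "v2 (fst (dblp n P0)/n) e1" by auto
qed

lemma g0: "g 0 = dblp n P0" unfolding g_def by simp
lemma gS: "g (Suc j) = dblp n (g j)" unfolding g_def by simp

lemma P0_on': "onC 0 (-(n^2)) (fst P0) (snd P0)" by (rule P0_on)

lemma g_props: "onC 0 (-(n^2)) (fst (g j)) (snd (g j)) \<and> fst (g j) \<in> \<rat> \<and> snd (g j) \<in> \<rat> \<and>
   v2 (fst (g j)/n) (e1 - 2*int j) \<and> snd (g j) \<noteq> 0"
proof (induction j)
  case 0
  have D: "dblp n P0 = dblp n (fst P0, snd P0)" by simp
  note dp = dblp_props[OF P0_on P0_y P0Q nQ, folded D]
  have v: "v2 (fst (g 0)/n) (e1 - 2*int 0)" using e1 g0 by simp
  moreover have "snd (g 0) \<noteq> 0" using y_nz[OF dp(1)[folded g0] v] e1 n_pos by simp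
  ultimately show ?case using dp g0 by simp
next
  case (Suc j)
  define x where "x = fst (g j)"
  define y where "y = snd (g j)"
  have gj: "g j = (x, y)" unfolding x_def y_def by simp
  have IH: "onC 0 (-(n^2)) x y" "x \<in> \<rat>" "y \<in> \<rat>" "v2 (x/n) (e1 - 2*int j)" "y \<noteq> 0"
    using Suc.IH unfolding x_def y_def by auto
  note dp = dblp_props[OF IH(1) IH(5) IH(2) IH(3) nQ, folded gj, folded gS]
  have "fst (g (Suc j)) / n = ((x/n)^2+1)^2/(4*(x/n)*((x/n)^2-1))"
    using dp(7) dbl_xi[OF IH(1) IH(5)] n_pos by simp
  moreover have "e1 - 2*int j < 0" using e1 by simp
  ultimately have v0: "v2 (fst (g (Suc j)) / n) (e1 - 2*int j - 2)"
    using xi_step[OF IH(4)] by simp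
  have "e1 - 2*int j - 2 = e1 - 2*int (Suc j)" by simp
  hence v: "v2 (fst (g (Suc j)) / n) (e1 - 2*int (Suc j))" using v0 by metis
  moreover have "snd (g (Suc j)) \<noteq> 0" using y_nz[OF dp(1) v] e1 n_pos by simp
  ultimately show ?case using dp by simp
qed

lemma g_sq: "sqr (fst (g j)) \<and> sqr (fst (g j) - n) \<and> sqr (fst (g j) + n)"
proof (cases j)
  case 0
  have D: "dblp n P0 = dblp n (fst P0, snd P0)" by simp
  note dp = dblp_props[OF P0_on P0_y P0Q nQ, folded D]
  show ?thesis using dp 0 g0 by simp
next
  case (Suc i)
  have gi: "g i = (fst (g i), snd (g i))" by simp
  note dp = dblp_props[of n "fst (g i)" "snd (g i)", folded gi, folded gS]
  show ?thesis using dp g_props[of i] nQ Suc by simp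
qed

lemma g_inj: "fst (g i) = fst (g j) \<Longrightarrow> i = j"
proof -
  assume "fst (g i) = fst (g j)"
  moreover have "v2 (fst (g i)/n) (e1 - 2*int i)" "v2 (fst (g j)/n) (e1 - 2*int j)" using g_props by auto
  ultimately have "e1 - 2*int i = e1 - 2*int j" using v2_unique by simp
  thus "i = j" by simp
qed

lemma sqr_nonneg: "sqr t \<Longrightarrow> t \<ge> 0" unfolding sqr_def by auto

lemma g_gt: "fst (g j) > n"
proof -
  have "fst (g j) - n \<ge> 0" using g_sq[of j] sqr_nonneg by blast
  moreover have "fst (g j) / n \<noteq> 1"
  proof
    assume "fst (g j) / n = 1"
    hence "v2 1 (e1 - 2 * int j)" using g_props[of j] by simp
    hence "e1 - 2 * int j = 0" using v2_unique v2_1 by blast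
    thus False using e1 by simp
  qed
  ultimately show ?thesis using n_pos by (cases "fst (g j) = n") auto
qed

end


lemma sqr_quot: assumes "sqr A" "sqr B" "A \<noteq> 0" "B \<noteq> 0" "A*B*C = nu^2" "nu \<in> \<rat>" shows "sqr C"
proof -
  obtain a where a: "a \<in> \<rat>" "A = a^2" using assms(1) sqr_def by auto
  obtain b where b: "b \<in> \<rat>" "B = b^2" using assms(2) sqr_def by auto
  have "a \<noteq> 0" "b \<noteq> 0" using a b assms by auto
  hence "C = (nu/(a*b))^2" using assms(5) a b by (simp add: field_simps power2_eq_square)
  thus ?thesis unfolding sqr_def using a b assms(6) by (intro bexI[of _ "nu/(a*b)"]) auto
qed

lemma onC_shift_plus: "onC 0 (-(n^2)) x y \<Longrightarrow> onC (-3*n) (2*n^2) (x+n) y"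
  unfolding onC_def by (simp add: algebra_simps power2_eq_square power3_eq_cube)
lemma onC_shift_minus: "onC 0 (-(n^2)) x y \<Longrightarrow> onC (3*n) (2*n^2) (x-n) y"
  unfolding onC_def by (simp add: algebra_simps power2_eq_square power3_eq_cube)

lemma chord_E:
  assumes c1: "onC 0 (-(n^2)) x1 y1" and c2: "onC 0 (-(n^2)) x2 y2" and ne: "x1 \<noteq> x2"
  and l: "l = (y2 - y1)/(x2 - x1)" and nu: "nu = y1 - l*x1" and x3: "x3 = l^2 - x1 - x2"
  shows "x1*x2*x3 = nu^2" "(x1+n)*(x2+n)*(x3+n) = (nu - l*n)^2" "(x1-n)*(x2-n)*(x3-n) = (nu + l*n)^2"
    "onC 0 (-(n^2)) x3 (-(l*x3 + nu))"
proof -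
  have x3': "x3 = l^2 - 0 - x1 - x2" using x3 by simp
  note A = chord[OF c1 c2 ne l nu x3']
  show "x1*x2*x3 = nu^2" "onC 0 (-(n^2)) x3 (-(l*x3 + nu))" using A by auto
  have ne': "x1 + n \<noteq> x2 + n" using ne by simp
  have l': "l = (y2 - y1)/((x2+n) - (x1+n))" using l by simp
  have nu': "nu - l*n = y1 - l*(x1+n)" using nu by (simp add: algebra_simps)
  have x3p: "x3 + n = l^2 - (-3*n) - (x1+n) - (x2+n)" using x3 by simp
  show "(x1+n)*(x2+n)*(x3+n) = (nu - l*n)^2"
    using chord(1)[OF onC_shift_plus[OF c1] onC_shift_plus[OF c2] ne' l' nu' x3p] .
  have ne'': "x1 - n \<noteq> x2 - n" using ne by simp
  have l'': "l = (y2 - y1)/((x2-n) - (x1-n))" using l by simp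
  have nu'': "nu + l*n = y1 - l*(x1-n)" using nu by (simp add: algebra_simps)
  have x3m: "x3 - n = l^2 - (3*n) - (x1-n) - (x2-n)" using x3 by simp
  show "(x1-n)*(x2-n)*(x3-n) = (nu + l*n)^2"
    using chord(1)[OF onC_shift_minus[OF c1] onC_shift_minus[OF c2] ne'' l'' nu'' x3m] .
qed

lemma pigeon:
  fixes f :: "nat \<Rightarrow> real"
  assumes b: "\<And>j. lo \<le> f j \<and> f j \<le> hi" and inj: "inj f" and d: "\<delta> > 0"
  shows "\<exists>i j. i \<noteq> j \<and> \<bar>f i - f j\<bar> < \<delta>"
proof -
  define h where "h j = \<lfloor>(f j - lo)/\<delta>\<rfloor>" for j
  have "h ` UNIV \<subseteq> {0..\<lfloor>(hi - lo)/\<delta>\<rfloor>}"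
  proof
    fix z assume "z \<in> h ` UNIV"
    then obtain j where z: "z = h j" by auto
    have "0 \<le> (f j - lo)/\<delta>" using b[of j] d by simp
    moreover have "(f j - lo)/\<delta> \<le> (hi - lo)/\<delta>" using b[of j] d by (simp add: divide_right_mono)
    ultimately show "z \<in> {0..\<lfloor>(hi - lo)/\<delta>\<rfloor>}" unfolding z h_def by (simp add: floor_mono)
  qed
  hence "finite (h ` UNIV)" by (rule finite_subset) simp
  hence "\<not> inj h" using finite_imageD infinite_UNIV_nat by blast
  then obtain i j where ij: "i \<noteq> j" "h i = h j" unfolding inj_def by blast
  have "\<bar>(f i - lo)/\<delta> - (f j - lo)/\<delta>\<bar> < 1" using ij(2) unfolding h_def
    by (smt (verit) floor_eq_iff)
  hence "\<bar>f i - f j\<bar>/\<delta> < 1" using d by (simp add: diff_divide_distrib[symmetric])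
  hence "\<bar>f i - f j\<bar> < \<delta>" using d by simp
  thus ?thesis using ij by blast
qed

context mset begin

definition "sqpt X Y \<longleftrightarrow> X \<in> \<rat> \<and> Y \<in> \<rat> \<and> onC 0 (-(n^2)) X Y \<and> sqr X \<and> sqr (X - n) \<and> sqr (X + n)"

lemma g_sqpt: "sqpt (fst (g j)) (snd (g j))"
  unfolding sqpt_def using g_props[of j] g_sq[of j] by auto

lemma ratQ: "a \<in> \<rat> \<Longrightarrow> b \<in> \<rat> \<Longrightarrow> a - b \<in> \<rat>" "a \<in> \<rat> \<Longrightarrow> b \<in> \<rat> \<Longrightarrow> a + b \<in> \<rat>"
  "a \<in> \<rat> \<Longrightarrow> b \<in> \<rat> \<Longrightarrow> a * b \<in> \<rat>" "a \<in> \<rat> \<Longrightarrow> b \<in> \<rat> \<Longrightarrow> a / b \<in> \<rat>"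
  "a \<in> \<rat> \<Longrightarrow> a^2 \<in> \<rat>" "a \<in> \<rat> \<Longrightarrow> -a \<in> \<rat>"
  by auto

lemma abs_opp: "(a::real) * b \<le> 0 \<Longrightarrow> \<bar>b - a\<bar> = \<bar>a\<bar> + \<bar>b\<bar>"
proof (cases "a \<ge> 0")
  case True
  assume h: "a * b \<le> 0"
  show ?thesis
  proof (cases "a = 0")
    case False
    hence "b \<le> 0" using h True by (metis linorder_not_le mult_pos_pos order_le_less)
    thus ?thesis using True by simp
  qed simp
next
  case False
  assume h: "a * b \<le> 0"
  hence "b \<ge> 0" using False by (metis linorder_not_le mult_neg_neg order.strict_iff_not)
  thus ?thesis using False by simp
qed

lemma large_aux: assumes Kn: "K \<ge> n" shows "\<exists>X Y. sqpt X Y \<and> X > K"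
proof (cases "\<exists>j. fst (g j) > K")
  case True thus ?thesis using g_sqpt by blast
next
  case False
  hence bnd: "\<And>j. fst (g j) \<le> K" by (simp add: not_less)
  have Kp: "K > 0" using Kn n_pos by simp
  define \<epsilon> where "\<epsilon> = n^2/(2*sqrt(K+1))"
  have ep: "\<epsilon> > 0" unfolding \<epsilon>_def using n_pos Kp by simp
  show ?thesis
  proof (cases "\<exists>j. \<bar>snd (g j)\<bar> < \<epsilon>")
    case True
    then obtain j where j: "\<bar>snd (g j)\<bar> < \<epsilon>" by blast
    define x where "x = fst (g j)"
    define y where "y = snd (g j)"
    have gj: "g j = (x, y)" unfolding x_def y_def by simp
    have IH: "onC 0 (-(n^2)) x y" "x \<in> \<rat>" "y \<in> \<rat>" "y \<noteq> 0"
      using g_props[of j] unfolding x_def y_def by auto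
    note dp = dblp_props[OF IH(1) IH(4) IH(2) IH(3) nQ, folded gj, folded gS]
    have ay: "\<bar>y\<bar> > 0" "\<bar>y\<bar> < \<epsilon>" using IH(4) j y_def by auto
    have "n^2/(2*\<epsilon>) < (x^2+n^2)/(2*\<bar>y\<bar>)"
    proof -
      have "n^2/(2*\<epsilon>) < n^2/(2*\<bar>y\<bar>)" using ay n_pos by (intro divide_strict_left_mono) auto
      also have "\<dots> \<le> (x^2+n^2)/(2*\<bar>y\<bar>)" using ay by (intro divide_right_mono) auto
      finally show ?thesis .
    qed
    moreover have "n^2/(2*\<epsilon>) = sqrt (K+1)" unfolding \<epsilon>_def using n_pos Kp by (simp add: field_simps)
    ultimately have "sqrt (K+1) < \<bar>(x^2+n^2)/(2*y)\<bar>" by (simp add: abs_mult)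
    hence "(sqrt (K+1))^2 < (\<bar>(x^2+n^2)/(2*y)\<bar>)^2" using Kp by (intro power_strict_mono) auto
    moreover have "(\<bar>(x^2+n^2)/(2*y)\<bar>)^2 = ((x^2+n^2)/(2*y))^2" by (rule power2_abs)
    ultimately have "K + 1 < ((x^2+n^2)/(2*y))^2" using Kp by simp
    hence "fst (g (Suc j)) > K" using dp(7) by simp
    thus ?thesis using g_sqpt by blast
  next
    case False
    hence ye: "\<And>j. \<bar>snd (g j)\<bar> \<ge> \<epsilon>" by (simp add: not_less)
    define \<delta> where "\<delta> = \<epsilon> / sqrt (3*K+1)"
    have dp: "\<delta> > 0" unfolding \<delta>_def using ep Kp by simp
    have ed: "(2*\<epsilon>/\<delta>)^2 = 4*(3*K+1)" unfolding \<delta>_def using ep Kp by (simp add: field_simps)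
    have "\<exists>i j. i \<noteq> j \<and> \<bar>fst (g i) - fst (g j)\<bar> < \<delta>"
    proof (rule pigeon[of n "\<lambda>j. fst (g j)" K])
      show "\<And>j. n \<le> fst (g j) \<and> fst (g j) \<le> K" using g_gt bnd less_imp_le by blast
      show "inj (\<lambda>j. fst (g j))" unfolding inj_def using g_inj by blast
    qed (rule dp)
    then obtain i j where ij: "i \<noteq> j" "\<bar>fst (g i) - fst (g j)\<bar> < \<delta>" by blast
    define x1 where "x1 = fst (g i)"
    define y1 where "y1 = snd (g i)"
    define x2 where "x2 = fst (g j)"
    define y2 where "y2 = (if snd (g i) * snd (g j) > 0 then - snd (g j) else snd (g j))"
    have P1: "onC 0 (-(n^2)) x1 y1" "x1 \<in> \<rat>" "y1 \<in> \<rat>" "\<bar>y1\<bar> \<ge> \<epsilon>" "sqr x1" "sqr (x1-n)" "sqr (x1+n)"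
      "x1 > n" "x1 \<le> K"
      using g_props[of i] g_sq[of i] ye[of i] g_gt[of i] bnd[of i] unfolding x1_def y1_def by auto
    have y2sq: "y2^2 = (snd (g j))^2" unfolding y2_def by simp
    have yj: "onC 0 (-(n^2)) x2 (snd (g j))" "snd (g j) \<in> \<rat>" using g_props[of j] unfolding x2_def by auto
    have P2: "onC 0 (-(n^2)) x2 y2" "x2 \<in> \<rat>" "y2 \<in> \<rat>" "\<bar>y2\<bar> \<ge> \<epsilon>" "sqr x2" "sqr (x2-n)" "sqr (x2+n)"
      "x2 > n" "x2 \<le> K"
    proof -
      show "onC 0 (-(n^2)) x2 y2" using yj(1) y2sq unfolding onC_def by simp
      show "y2 \<in> \<rat>" using yj(2) unfolding y2_def by simp
      show "\<bar>y2\<bar> \<ge> \<epsilon>" using ye[of j] unfolding y2_def by simp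
    qed (use g_props[of j] g_sq[of j] g_gt[of j] bnd[of j] x2_def in auto)
    have ne: "x1 \<noteq> x2" using g_inj ij(1) unfolding x1_def x2_def by blast
    have sgn: "y1 * y2 \<le> 0" unfolding y1_def y2_def by (auto simp: mult_less_0_iff)
    have "\<bar>y2 - y1\<bar> = \<bar>y1\<bar> + \<bar>y2\<bar>" using abs_opp[OF sgn] .
    hence dy: "\<bar>y2 - y1\<bar> \<ge> 2*\<epsilon>" using P1(4) P2(4) by simp
    have dx: "\<bar>x2 - x1\<bar> < \<delta>" "\<bar>x2 - x1\<bar> > 0" using ij(2) ne unfolding x1_def x2_def by auto
    define l where "l = (y2 - y1)/(x2 - x1)"
    define nu where "nu = y1 - l*x1"
    define x3 where "x3 = l^2 - x1 - x2"
    note CE = chord_E[OF P1(1) P2(1) ne l_def nu_def x3_def]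
    have lQ: "l \<in> \<rat>" "nu \<in> \<rat>" "x3 \<in> \<rat>" unfolding l_def nu_def x3_def using P1 P2 by (auto intro!: Rats_divide Rats_diff Rats_mult Rats_power)
    have "2*\<epsilon>/\<delta> < \<bar>l\<bar>"
    proof -
      have "2*\<epsilon>/\<delta> < 2*\<epsilon>/\<bar>x2 - x1\<bar>" using dx ep by (intro divide_strict_left_mono) auto
      also have "\<dots> \<le> \<bar>y2 - y1\<bar>/\<bar>x2 - x1\<bar>" using dy dx by (intro divide_right_mono) auto
      finally show ?thesis unfolding l_def by (simp add: abs_divide)
    qed
    hence "(2*\<epsilon>/\<delta>)^2 < \<bar>l\<bar>^2" using ep dp by (intro power_strict_mono) auto
    hence "4*(3*K+1) < l^2" using ed by simp
    hence x3K: "x3 > K" unfolding x3_def using P1(9) P2(9) Kp by simp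
    have "sqr x3" using sqr_quot[OF P1(5) P2(5) _ _ CE(1) lQ(2)] P1(8) P2(8) n_pos by simp
    moreover have "sqr (x3 + n)" using sqr_quot[OF P1(7) P2(7) _ _ CE(2)] P1(8) P2(8) n_pos lQ nQ by simp
    moreover have "sqr (x3 - n)" using sqr_quot[OF P1(6) P2(6) _ _ CE(3)] P1(8) P2(8) n_pos lQ nQ by simp
    moreover have "- (l * x3 + nu) \<in> \<rat>" using lQ by auto
    ultimately have "sqpt x3 (- (l * x3 + nu))" unfolding sqpt_def using CE(4) lQ by auto
    thus ?thesis using x3K by blast
  qed
qed

lemma large: "\<exists>X Y. sqpt X Y \<and> X > K"
proof -
  obtain X Y where "sqpt X Y" "X > max K n" using large_aux[of "max K n"] by auto
  thus ?thesis by auto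
qed

end


lemma prod_id:
  assumes cP: "onC 0 (-(n^2)) P yP" and cX: "onC 0 (-(n^2)) X Y" and ne: "X \<noteq> P"
  shows "(((Y - yP)/(X - P))^2 - P - X - P) * (((Y + yP)/(X - P))^2 - P - X - P)
         = ((P^2+n^2)^2 - 4*yP^2*X)/(X-P)^2"
proof -
  define d where "d = X - P"
  have d0: "d \<noteq> 0" using ne d_def by simp
  have YP: "yP^2 = P^3 - n^2*P" using cP unfolding onC_def by simp
  have YX: "Y^2 = X^3 - n^2*X" using cX unfolding onC_def by simp
  define c where "c = (2*P+X)*d^2"
  have e1: "((Y - yP)/d)^2 - P - X - P = ((Y - yP)^2 - c)/d^2" unfolding c_def
    using d0 by (simp add: field_simps power2_eq_square)
  have e2: "((Y + yP)/d)^2 - P - X - P = ((Y + yP)^2 - c)/d^2" unfolding c_def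
    using d0 by (simp add: field_simps power2_eq_square)
  have num: "((Y - yP)^2 - c) * ((Y + yP)^2 - c) = ((P^2+n^2)^2 - 4*yP^2*X) * d^2"
  proof -
    have "((Y - yP)^2 - c) * ((Y + yP)^2 - c) = (Y^2 - yP^2)^2 - 2*c*(Y^2 + yP^2) + c^2" by algebra
    also have "\<dots> = ((P^2+n^2)^2 - 4*yP^2*X) * d^2" unfolding YX c_def d_def YP by algebra
    finally show ?thesis .
  qed
  have "((Y - yP)^2 - c)/d^2 * (((Y + yP)^2 - c)/d^2) = (((Y - yP)^2 - c) * ((Y + yP)^2 - c))/(d^2*d^2)"
    by simp
  also have "\<dots> = (((P^2+n^2)^2 - 4*yP^2*X) * d^2)/(d^2*d^2)" unfolding num ..
  also have "\<dots> = ((P^2+n^2)^2 - 4*yP^2*X)/d^2" using d0 by (intro mult_divide_mult_cancel_right) simp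
  finally show ?thesis unfolding d_def[symmetric] unfolding e1 e2 .
qed

lemma diff_id:
  assumes cP: "onC 0 (-(n^2)) P yq" and cX: "onC 0 (-(n^2)) X Y" and ne: "X \<noteq> P"
  shows "((Y - yq)/(X - P))^2 - P - X - P = ((3*P^2-n^2)*X + yq^2 - 2*P^3 - 2*Y*yq)/(X-P)^2"
proof -
  define d where "d = X - P"
  have d0: "d \<noteq> 0" using ne d_def by simp
  have YX: "Y^2 = X^3 - n^2*X" using cX unfolding onC_def by simp
  have "((Y - yq)/(X - P))^2 - P - X - P = ((Y - yq)^2 - (2*P+X)*d^2)/d^2" unfolding d_def[symmetric]
    using d0 by (simp add: field_simps power2_eq_square)
  also have "(Y - yq)^2 - (2*P+X)*d^2 = (3*P^2-n^2)*X + yq^2 - 2*P^3 - 2*Y*yq"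
  proof -
    have "(Y - yq)^2 - (2*P+X)*d^2 = Y^2 + yq^2 - 2*Y*yq - (2*P+X)*d^2" by algebra
    also have "\<dots> = (3*P^2-n^2)*X + yq^2 - 2*P^3 - 2*Y*yq" unfolding YX d_def by algebra
    finally show ?thesis .
  qed
  finally show ?thesis unfolding d_def .
qed

lemma bound_lem:
  assumes cX: "onC 0 (-(n^2)) X Y" and X2: "X \<ge> 2*P" and X1: "X \<ge> 1" and P0: "P > 0"
  shows "\<bar>((3*P^2-n^2)*X + yq^2 - 2*P^3 - 2*Y*yq)/(X-P)^2\<bar>
    \<le> (4*\<bar>3*P^2-n^2\<bar> + 4*\<bar>yq^2 - 2*P^3\<bar> + 8*\<bar>yq\<bar>)/sqrt X"
proof -
  have Xp: "X > 0" using X1 by simp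
  have sX3: "sqrt X * sqrt X = X" using Xp by simp
  have s1: "1 \<le> sqrt X" using X1 by simp
  have sX2: "sqrt X \<le> X"
  proof -
    have "sqrt X * 1 \<le> sqrt X * sqrt X" using s1 by (intro mult_left_mono) auto
    thus ?thesis using sX3 by simp
  qed
  have sX: "sqrt X > 0" "sqrt X \<le> X" "sqrt X * sqrt X = X" using Xp sX2 sX3 by auto
  have YX: "Y^2 \<le> X^3" using cX Xp unfolding onC_def by simp
  have aY: "\<bar>Y\<bar> \<le> X * sqrt X"
  proof -
    have "\<bar>Y\<bar> = sqrt (Y^2)" by simp
    also have "\<dots> \<le> sqrt (X^3)" by (rule real_sqrt_le_mono[OF YX])
    also have "X^3 = (X * sqrt X)^2" using sX(3) by (simp add: power2_eq_square power3_eq_cube)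
    finally show ?thesis using Xp sX by simp
  qed
  have dd: "(X-P)^2 \<ge> X^2/4"
  proof -
    have "X - P \<ge> X/2" using X2 by simp
    hence "(X/2)^2 \<le> (X-P)^2" using Xp by (intro power_mono) auto
    thus ?thesis by (simp add: power_divide)
  qed
  define C1 where "C1 = \<bar>3*P^2-n^2\<bar>"
  define C2 where "C2 = \<bar>yq^2 - 2*P^3\<bar>"
  have num: "\<bar>(3*P^2-n^2)*X + yq^2 - 2*P^3 - 2*Y*yq\<bar> \<le> C1*X + C2 + 2*\<bar>yq\<bar>*(X*sqrt X)"
  proof -
    have "\<bar>(3*P^2-n^2)*X + yq^2 - 2*P^3 - 2*Y*yq\<bar> \<le> \<bar>(3*P^2-n^2)*X\<bar> + \<bar>yq^2 - 2*P^3\<bar> + \<bar>2*Y*yq\<bar>"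
      by linarith
    also have "\<bar>(3*P^2-n^2)*X\<bar> = C1*X" unfolding C1_def using Xp by (simp add: abs_mult)
    also have "\<bar>2*Y*yq\<bar> \<le> 2*\<bar>yq\<bar>*(X*sqrt X)"
    proof -
      have "\<bar>yq\<bar> * \<bar>Y\<bar> \<le> \<bar>yq\<bar> * (X*sqrt X)" using aY by (intro mult_left_mono) auto
      thus ?thesis by (simp add: abs_mult algebra_simps)
    qed
    finally show ?thesis unfolding C2_def by simp
  qed
  have "\<bar>((3*P^2-n^2)*X + yq^2 - 2*P^3 - 2*Y*yq)/(X-P)^2\<bar> \<le> (C1*X + C2 + 2*\<bar>yq\<bar>*(X*sqrt X))/(X^2/4)"
  proof -
    have "\<bar>((3*P^2-n^2)*X + yq^2 - 2*P^3 - 2*Y*yq)/(X-P)^2\<bar> = \<bar>(3*P^2-n^2)*X + yq^2 - 2*P^3 - 2*Y*yq\<bar>/(X-P)^2"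
      by (simp add: abs_divide)
    also have "\<dots> \<le> (C1*X + C2 + 2*\<bar>yq\<bar>*(X*sqrt X))/(X-P)^2" using num by (intro divide_right_mono) auto
    also have "\<dots> \<le> (C1*X + C2 + 2*\<bar>yq\<bar>*(X*sqrt X))/(X^2/4)"
      using dd Xp sX X2 P0 by (intro divide_left_mono) (auto simp: C1_def C2_def intro!: add_nonneg_nonneg mult_nonneg_nonneg)
    finally show ?thesis .
  qed
  also have "\<dots> = 4*C1/X + 4*C2/X^2 + 8*\<bar>yq\<bar>/sqrt X"
    using Xp sX by (simp add: field_simps power2_eq_square)
  also have "\<dots> \<le> 4*C1/sqrt X + 4*C2/sqrt X + 8*\<bar>yq\<bar>/sqrt X"
  proof -
    have "4*C1/X \<le> 4*C1/sqrt X" using sX by (intro divide_left_mono) (auto simp: C1_def)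
    moreover have "4*C2/X^2 \<le> 4*C2/sqrt X"
    proof -
      have "X * 1 \<le> X * X" using X1 by (intro mult_left_mono) auto
      hence "sqrt X \<le> X^2" using sX(2) by (simp add: power2_eq_square)
      thus ?thesis using sX by (intro divide_left_mono) (auto simp: C2_def)
    qed
    ultimately show ?thesis by simp
  qed
  also have "\<dots> = (4*C1 + 4*C2 + 8*\<bar>yq\<bar>)/sqrt X" by (simp add: add_divide_distrib)
  finally show ?thesis unfolding C1_def C2_def .
qed


lemma close_one:
  assumes cP: "onC 0 (-(n^2)) P yq" and cX: "onC 0 (-(n^2)) X Y" and X2: "X \<ge> 2*P" and X1: "X \<ge> 1"
    and P0: "P > 0" and e: "\<epsilon> > 0"
    and XC: "X > ((4*\<bar>3*P^2-n^2\<bar> + 4*\<bar>yq^2 - 2*P^3\<bar> + 8*\<bar>yq\<bar>)/\<epsilon>)^2"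
  shows "\<bar>(((Y - yq)/(X - P))^2 - P - X) - P\<bar> < \<epsilon>"
proof -
  define C where "C = 4*\<bar>3*P^2-n^2\<bar> + 4*\<bar>yq^2 - 2*P^3\<bar> + 8*\<bar>yq\<bar>"
  have C0: "C \<ge> 0" unfolding C_def by simp
  have ne: "X \<noteq> P" using X2 P0 by simp
  have "\<bar>(((Y - yq)/(X - P))^2 - P - X) - P\<bar> \<le> C / sqrt X"
    using diff_id[OF cP cX ne] bound_lem[OF cX X2 X1 P0, of yq] unfolding C_def by simp
  also have "C / sqrt X < \<epsilon>"
  proof -
    have "sqrt ((C/\<epsilon>)^2) < sqrt X" using XC unfolding C_def by (simp only: real_sqrt_less_mono)
    hence "C/\<epsilon> < sqrt X" using C0 e by simp
    hence "C < \<epsilon> * sqrt X" using e by (simp add: field_simps)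
    thus ?thesis using X1 by (simp add: field_simps)
  qed
  finally show ?thesis .
qed

context mset begin

definition "ksq t \<longleftrightarrow> (\<exists>r\<in>\<rat>. t = k * r^2)"

lemma ksq_quot: assumes "ksq A" "sqr B" "A \<noteq> 0" "B \<noteq> 0" "A*B*C = nu^2" "nu \<in> \<rat>" shows "ksq C"
proof -
  obtain a where a: "a \<in> \<rat>" "A = k*a^2" using assms(1) ksq_def by auto
  obtain b where b: "b \<in> \<rat>" "B = b^2" using assms(2) sqr_def by auto
  have "a \<noteq> 0" "b \<noteq> 0" using a b assms by auto
  hence "C = k*(nu/(k*a*b))^2" using assms(5) a b k_pos by (simp add: field_simps power2_eq_square)
  thus ?thesis unfolding ksq_def using a b assms(6) kQ by (intro bexI[of _ "nu/(k*a*b)"]) auto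
qed

lemma near: assumes e: "\<epsilon> > 0"
  shows "\<exists>z. k^2 - \<epsilon> < z \<and> z < k^2 \<and> sqr z \<and> ksq (z + n) \<and> ksq (z - n)"
proof -
  define P where "P = k^2"
  define yP where "yP = k^2*(1-m^2)"
  have cP: "onC 0 (-(n^2)) P yP" using P0_on unfolding P0_def P_def yP_def by simp
  have cP': "onC 0 (-(n^2)) P (-yP)" using cP unfolding onC_def by simp
  have Pp: "P > 0" unfolding P_def using k_pos by simp
  have yP0: "yP \<noteq> 0" using P0_y unfolding P0_def yP_def by simp
  have PQ: "P \<in> \<rat>" "yP \<in> \<rat>" unfolding P_def yP_def using kQ mQ by auto
  define C where "C = 4*\<bar>3*P^2-n^2\<bar> + 4*\<bar>yP^2 - 2*P^3\<bar> + 8*\<bar>yP\<bar>"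
  define K0 where "K0 = max (max (2*P) 1) (max ((P^2+n^2)^2/(4*yP^2)) ((C/\<epsilon>)^2))"
  obtain X Y where XY: "sqpt X Y" "X > K0" using large by blast
  have cX: "onC 0 (-(n^2)) X Y" and XQ: "X \<in> \<rat>" "Y \<in> \<rat>" and sX: "sqr X" "sqr (X-n)" "sqr (X+n)"
    using XY(1) unfolding sqpt_def by auto
  have X2: "X \<ge> 2*P" "X \<ge> 1" "X > (P^2+n^2)^2/(4*yP^2)" "X > (C/\<epsilon>)^2" using XY(2) unfolding K0_def by auto
  have ne: "P \<noteq> X" using X2 Pp by simp
  have nP: "n < P"
  proof -
    have "P - n = k*(1-m)^2" unfolding P_def n_def k_def by algebra
    moreover have "(1-m)^2 > 0" using m1 by simp
    ultimately show ?thesis using k_pos by (smt (verit) mult_pos_pos)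
  qed
  have Xn: "X > n" "X \<noteq> 0" "X + n \<noteq> 0" "X - n \<noteq> 0" using X2 Pp n_pos nP by auto
  have sqP: "sqr P" unfolding sqr_def P_def using kQ by auto
  have kP: "ksq (P + n)" "ksq (P - n)" "P + n \<noteq> 0" "P - n \<noteq> 0"
  proof -
    have "P + n = k*(1+m)^2" unfolding P_def n_def k_def by algebra
    thus "ksq (P + n)" unfolding ksq_def using mQ by (intro bexI[of _ "1+m"]) auto
    have "P - n = k*(1-m)^2" unfolding P_def n_def k_def by algebra
    thus "ksq (P - n)" unfolding ksq_def using mQ by (intro bexI[of _ "1-m"]) auto
    show "P + n \<noteq> 0" using Pp n_pos by simp
    have "(1-m)^2 > 0" using m1 by simp
    thus "P - n \<noteq> 0" using \<open>P - n = k*(1-m)^2\<close> k_pos by simp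
  qed
  have good: "sqr z \<and> ksq (z + n) \<and> ksq (z - n)"
    if yq: "yq = yP \<or> yq = -yP" and z: "z = ((Y - yq)/(X - P))^2 - P - X" for yq z
  proof -
    have c1: "onC 0 (-(n^2)) P yq" using yq cP cP' by auto
    have yqQ: "yq \<in> \<rat>" using yq PQ by auto
    define l where "l = (Y - yq)/(X - P)"
    define nu where "nu = yq - l*P"
    have z': "z = l^2 - P - X" unfolding z l_def ..
    note CE = chord_E[OF c1 cX ne l_def nu_def z']
    have Q: "l \<in> \<rat>" "nu \<in> \<rat>" unfolding l_def nu_def using XQ PQ yqQ by auto
    show ?thesis
      using sqr_quot[OF sqP sX(1) _ _ CE(1) Q(2)] ksq_quot[OF kP(1) sX(3) kP(3) _ CE(2)]
        ksq_quot[OF kP(2) sX(2) kP(4) _ CE(3)] Xn Pp Q nQ by auto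
  qed
  define s where "s = ((Y - yP)/(X - P))^2 - P - X"
  define t where "t = ((Y - (-yP))/(X - P))^2 - P - X"
  have "(s - P) * (t - P) = ((P^2+n^2)^2 - 4*yP^2*X)/(X-P)^2"
    using prod_id[OF cP cX] ne unfolding s_def t_def by simp
  moreover have "(P^2+n^2)^2 - 4*yP^2*X < 0"
  proof -
    have "yP^2 > 0" using yP0 by simp
    thus ?thesis using X2(3) by (simp add: field_simps)
  qed
  moreover have "(X-P)^2 > 0" using ne by simp
  ultimately have neg: "(s - P) * (t - P) < 0" by (simp add: divide_neg_pos)
  have cs: "\<bar>s - P\<bar> < \<epsilon>" unfolding s_def
    using close_one[OF cP cX X2(1) X2(2) Pp e] X2(4) unfolding C_def by simp
  have ct: "\<bar>t - P\<bar> < \<epsilon>" unfolding t_def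
    using close_one[OF cP' cX X2(1) X2(2) Pp e] X2(4) unfolding C_def by simp
  show ?thesis
  proof (cases "s < P")
    case True
    have "P - \<epsilon> < s" using cs by simp
    moreover have "sqr s \<and> ksq (s + n) \<and> ksq (s - n)" using good[of yP s] s_def by simp
    ultimately show ?thesis using True unfolding P_def by blast
  next
    case False
    hence "t < P" using neg by (smt (verit) mult_nonneg_nonneg)
    have "P - \<epsilon> < t" using ct by simp
    moreover have "sqr t \<and> ksq (t + n) \<and> ksq (t - n)" using good[of "-yP" t] t_def by simp
    ultimately show ?thesis using \<open>t < P\<close> unfolding P_def by blast
  qed
qed

end


definition L :: "real \<Rightarrow> real" where "L t = ln ((1+t)/(1-t))"

lemma L_props: assumes "0 < t" "t < 1"
  shows "exp (L t) = (1+t)/(1-t)" "cosh (L t) = (1+t^2)/(1-t^2)" "sinh (L t) = 2*t/(1-t^2)" "L t > 0"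
proof -
  have X: "(1+t)/(1-t) > 0" using assms by simp
  show "exp (L t) = (1+t)/(1-t)" unfolding L_def using X by simp
  have i: "inverse ((1+t)/(1-t)) = (1-t)/(1+t)" by simp
  have d: "1 - t^2 = (1-t)*(1+t)" by algebra
  have nz: "1 - t \<noteq> 0" "1 + t \<noteq> 0" "1 - t*t \<noteq> 0"
  proof -
    have "t*t < 1*1" using assms by (intro mult_strict_mono) auto
    thus "1 - t \<noteq> 0" "1 + t \<noteq> 0" "1 - t*t \<noteq> 0" using assms by auto
  qed
  show "cosh (L t) = (1+t^2)/(1-t^2)" unfolding L_def cosh_ln_real[OF X] i d using nz
    by (simp add: field_simps power2_eq_square)
  show "sinh (L t) = 2*t/(1-t^2)" unfolding L_def sinh_ln_real[OF X] i d using nz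
    by (simp add: field_simps power2_eq_square)
  have "(1+t)/(1-t) > 1" using assms by simp
  thus "L t > 0" unfolding L_def by simp
qed

lemma L_mono: "-1 < s \<Longrightarrow> s < t \<Longrightarrow> t < 1 \<Longrightarrow> L s < L t"
proof -
  assume a: "-1 < s" "s < t" "t < 1"
  have "(1+s)/(1-s) < (1+t)/(1-t)" using a by (simp add: field_simps)
  moreover have "(1+s)/(1-s) > 0" using a by simp
  ultimately show ?thesis unfolding L_def by simp
qed

lemma hyp_angle_sym: "hyp_angle x y z = hyp_angle x z y"
  unfolding hyp_angle_def by (simp add: mult.commute)

lemma sq_lt1: "0 < t \<Longrightarrow> t < 1 \<Longrightarrow> t^2 < (1::real)"
proof -
  assume "0 < t" "t < 1"
  hence "t*t < 1*1" by (intro mult_strict_mono) auto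
  thus ?thesis by (simp add: power2_eq_square)
qed

lemma frac1: "A \<noteq> 0 \<Longrightarrow> B \<noteq> 0 \<Longrightarrow> C \<noteq> 0 \<Longrightarrow> q \<noteq> 0 \<Longrightarrow> r \<noteq> 0 \<Longrightarrow>
  (Q/B*(R/C) - P/A)/(2*q/B*(2*r/C)) = (Q*R*A - P*B*C)/(A*(4*q*(r::real)))"
  by (simp add: field_simps)

lemma frac2: "A \<noteq> 0 \<Longrightarrow> q \<noteq> 0 \<Longrightarrow> r \<noteq> 0 \<Longrightarrow> E \<noteq> 0 \<Longrightarrow> X*E = 4*q^2*P1*A \<Longrightarrow>
  X/(A*(4*q*r)) = P1*q/(E*(r::real))"
proof -
  assume a: "A \<noteq> 0" "q \<noteq> 0" "r \<noteq> 0" "E \<noteq> 0" "X*E = 4*q^2*P1*A"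
  hence "X = 4*q^2*P1*A/E" by (simp add: field_simps)
  thus ?thesis using a by (simp add: field_simps power2_eq_square)
qed

lemma angle_gen:
  assumes p: "0 < p" "p < 1" and q: "0 < q" "q < 1" and r: "0 < r" "r < 1"
    and rr: "r^2 * (1 + p^2*q^2) = p^2 + q^2"
  shows "cos (hyp_angle (L p) (L q) (L r)) = (1+p^2)*q/((1+p^2*q^2)*r)"
        "sin (hyp_angle (L p) (L q) (L r)) = p*(1-q^2)/((1+p^2*q^2)*r)"
proof -
  define ca where "ca = (1+p^2)*q/((1+p^2*q^2)*r)"
  define sa where "sa = p*(1-q^2)/((1+p^2*q^2)*r)"
  have nz: "1 - p^2 \<noteq> 0" "1 - q^2 \<noteq> 0" "1 - r^2 \<noteq> 0" "1 + p^2*q^2 \<noteq> 0" "q \<noteq> 0" "r \<noteq> 0"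
  proof -
    have h: "p^2*q^2 \<ge> 0" by simp
    hence "1 + p^2*q^2 > 0" by linarith
    thus "1 - p^2 \<noteq> 0" "1 - q^2 \<noteq> 0" "1 - r^2 \<noteq> 0" "1 + p^2*q^2 \<noteq> 0" "q \<noteq> 0" "r \<noteq> 0"
      using sq_lt1[OF p] sq_lt1[OF q] sq_lt1[OF r] p q r by auto
  qed
  have key: "((1+q^2)*(1+r^2)*(1-p^2) - (1+p^2)*(1-q^2)*(1-r^2)) * (1+p^2*q^2) = 4*q^2*(1+p^2)*(1-p^2)"
  proof -
    have "((1+q^2)*(1+r^2)*(1-p^2) - (1+p^2)*(1-q^2)*(1-r^2)) * (1+p^2*q^2) - 4*q^2*(1+p^2)*(1-p^2)
       = 2*(1-p^2*q^2) * (r^2 * (1 + p^2*q^2) - (p^2 + q^2))" by algebra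
    thus ?thesis using rr by simp
  qed
  have arg: "(cosh (L q) * cosh (L r) - cosh (L p)) / (sinh (L q) * sinh (L r)) = ca"
  proof -
    have "(cosh (L q) * cosh (L r) - cosh (L p)) / (sinh (L q) * sinh (L r))
       = ((1+q^2)/(1-q^2) * ((1+r^2)/(1-r^2)) - (1+p^2)/(1-p^2)) / (2*q/(1-q^2) * (2*r/(1-r^2)))"
      using L_props p q r by simp
    also have "\<dots> = ((1+q^2)*(1+r^2)*(1-p^2) - (1+p^2)*(1-q^2)*(1-r^2)) / ((1-p^2)*(4*q*r))"
      using nz by (intro frac1) auto
    also have "\<dots> = ca" unfolding ca_def using nz key by (intro frac2) auto
    finally show ?thesis .
  qed
  have id: "1 - ca^2 = sa^2"
  proof -
    have "((1+p^2*q^2)*r)^2 = (1+p^2*q^2)*(r^2 * (1 + p^2*q^2))" by algebra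
    hence D: "((1+p^2*q^2)*r)^2 = (1+p^2*q^2)*(p^2+q^2)" unfolding rr .
    have "((1+p^2*q^2)*r)^2 - ((1+p^2)*q)^2 = (p*(1-q^2))^2" unfolding D by algebra
    hence "1 - (((1+p^2)*q)/((1+p^2*q^2)*r))^2 = ((p*(1-q^2))/((1+p^2*q^2)*r))^2"
      using nz by (simp add: power_divide field_simps)
    thus ?thesis unfolding ca_def sa_def .
  qed
  have sa0: "sa \<ge> 0" unfolding sa_def using p q r by (simp add: power_le_one)
  have cab: "-1 \<le> ca" "ca \<le> 1"
  proof -
    have "ca^2 \<le> 1" using id by (smt (verit) zero_le_power2)
    hence "\<bar>ca\<bar> \<le> 1" using abs_square_le_1 by blast
    thus "-1 \<le> ca" "ca \<le> 1" by auto
  qed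
  have ha: "hyp_angle (L p) (L q) (L r) = arccos ca" unfolding hyp_angle_def arg ..
  show "cos (hyp_angle (L p) (L q) (L r)) = (1+p^2)*q/((1+p^2*q^2)*r)" unfolding ha ca_def[symmetric]
    using cab by simp
  have "sin (arccos ca) = sqrt (sa^2)" using sin_arccos[OF cab] id by simp
  thus "sin (hyp_angle (L p) (L q) (L r)) = p*(1-q^2)/((1+p^2*q^2)*r)" unfolding ha sa_def[symmetric]
    using sa0 by simp
qed

lemma frac3: "B \<noteq> 0 \<Longrightarrow> D \<noteq> 0 \<Longrightarrow> F \<noteq> 0 \<Longrightarrow> A*C*F = E*B*D \<Longrightarrow> A/B*(C/D) = E/(F::real)"
  by (simp add: field_simps)

lemma dd_add: "(x::real)/D * (y/D) + z/D * (w/D) = (x*y + z*w)/(D*D)"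
  by (simp add: add_divide_distrib)
lemma dd_diff: "(x::real)/D * (y/D) - z/D * (w/D) = (x*y - z*w)/(D*D)"
  by (simp add: diff_divide_distrib)

lemma diff_pos: "(a::real) - b = c \<Longrightarrow> 0 < c \<Longrightarrow> b < a" by simp

lemma frac_lt: "0 < B \<Longrightarrow> 0 < D \<Longrightarrow> A*D < C*B \<Longrightarrow> A/B < C/(D::real)"
  by (simp add: field_simps)

lemma area_cos: fixes p q r E :: real assumes "E = 1 + p^2*q^2" "r^2 * E = p^2 + q^2" "p^2 + q^2 \<noteq> 0" "r \<noteq> 0" "E \<noteq> 0"
  shows "p*(1-q^2)/(E*r) * ((1+q^2)*p/(E*r)) + (1+p^2)*q/(E*r) * (q*(1-p^2)/(E*r)) = (1 - (p*q)^2)/(1+(p*q)^2)"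
proof -
  have "p*(1-q^2)/(E*r) * ((1+q^2)*p/(E*r)) + (1+p^2)*q/(E*r) * (q*(1-p^2)/(E*r))
     = (p*(1-q^2)*((1+q^2)*p) + (1+p^2)*q*(q*(1-p^2))) / ((E*r)*(E*r))"
    by (rule dd_add)
  also have "(E*r)*(E*r) = E * (r^2 * E)" by algebra
  also have "p*(1-q^2)*((1+q^2)*p) + (1+p^2)*q*(q*(1-p^2)) = p^2*(1-q^2)*(1+q^2) + q^2*(1+p^2)*(1-p^2)" by algebra
  also have "p^2*(1-q^2)*(1+q^2) + q^2*(1+p^2)*(1-p^2) = (p^2+q^2)*(1-p^2*q^2)" by algebra
  also have "E * (r^2 * E) = E * (p^2+q^2)" using assms(2) by simp
  also have "(p^2+q^2)*(1-p^2*q^2) / (E * (p^2+q^2)) = (1-p^2*q^2)/E" using assms(3) by simp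
  finally show ?thesis using assms(1) by (simp add: power_mult_distrib)
qed

lemma area_sin: fixes p q r E :: real assumes "E = 1 + p^2*q^2" "r^2 * E = p^2 + q^2" "p^2 + q^2 \<noteq> 0" "r \<noteq> 0" "E \<noteq> 0"
  shows "(1+p^2)*q/(E*r) * ((1+q^2)*p/(E*r)) - p*(1-q^2)/(E*r) * (q*(1-p^2)/(E*r)) = 2*(p*q)/(1+(p*q)^2)"
proof -
  have "(1+p^2)*q/(E*r) * ((1+q^2)*p/(E*r)) - p*(1-q^2)/(E*r) * (q*(1-p^2)/(E*r))
     = ((1+p^2)*q*((1+q^2)*p) - p*(1-q^2)*(q*(1-p^2))) / ((E*r)*(E*r))"
    by (rule dd_diff)
  also have "(E*r)*(E*r) = E * (r^2 * E)" by algebra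
  also have "(1+p^2)*q*((1+q^2)*p) - p*(1-q^2)*(q*(1-p^2)) = (1+p^2)*q*(1+q^2)*p - p*(1-q^2)*q*(1-p^2)" by algebra
  also have "(1+p^2)*q*(1+q^2)*p - p*(1-q^2)*q*(1-p^2) = (p^2+q^2)*(2*p*q)" by algebra
  also have "E * (r^2 * E) = E * (p^2+q^2)" using assms(2) by simp
  also have "(p^2+q^2)*(2*p*q) / (E * (p^2+q^2)) = (2*p*q)/E" using assms(3) by simp
  finally show ?thesis using assms(1) by (simp add: power_mult_distrib)
qed

lemma tri_main:
  assumes Q: "p \<in> \<rat>" "q \<in> \<rat>" "r \<in> \<rat>" and p: "0 < p" "p < 1" and q: "0 < q" "q < 1" and r: "0 < r" "r < 1"
    and rr: "r^2 * (1 + p^2*q^2) = p^2 + q^2"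
  shows "hyp_heron (L p) (L q) (L r)" "has_right_angle (L p) (L q) (L r)"
    "cos (hyp_area (L p) (L q) (L r)) = (1 - (p*q)^2)/(1+(p*q)^2)"
    "sin (hyp_area (L p) (L q) (L r)) = 2*(p*q)/(1+(p*q)^2)"
    "L p < L r" "L q < L r"
proof -
  define E where "E = 1 + p^2*q^2"
  have E0: "E > 0" unfolding E_def by (simp add: add_pos_nonneg)
  have rr': "r^2 * (1 + q^2*p^2) = q^2 + p^2" using rr by (simp add: mult.commute add.commute)
  note A = angle_gen[OF p q r rr]
  note B0 = angle_gen[OF q p r rr']
  have B: "cos (hyp_angle (L q) (L r) (L p)) = (1+q^2)*p/(E*r)"
          "sin (hyp_angle (L q) (L r) (L p)) = q*(1-p^2)/(E*r)"
    using B0 unfolding E_def by (simp_all add: hyp_angle_sym mult.commute)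
  have A': "cos (hyp_angle (L p) (L q) (L r)) = (1+p^2)*q/(E*r)"
          "sin (hyp_angle (L p) (L q) (L r)) = p*(1-q^2)/(E*r)" using A unfolding E_def by auto
  have sq: "p^2 < 1" "q^2 < 1" "r^2 < 1" using sq_lt1 p q r by auto
  have nz: "1 - p^2 \<noteq> 0" "1 - q^2 \<noteq> 0" "1 - r^2 \<noteq> 0" using sq by auto
  have ch: "cosh (L p) * cosh (L q) - cosh (L r) = 0"
  proof -
    have "(1+p^2)*(1+q^2)*(1-r^2) - (1+r^2)*(1-p^2)*(1-q^2) = 2*((p^2+q^2) - r^2*(1+p^2*q^2))" by algebra
    hence "(1+p^2)*(1+q^2)*(1-r^2) = (1+r^2)*(1-p^2)*(1-q^2)" using rr by simp
    hence "(1+p^2)/(1-p^2)*((1+q^2)/(1-q^2)) = (1+r^2)/(1-r^2)" using nz by (intro frac3) (auto simp: mult_ac)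
    thus ?thesis using L_props p q r by simp
  qed
  have G: "hyp_angle (L r) (L p) (L q) = pi/2" unfolding hyp_angle_def ch by simp
  have area: "hyp_area (L p) (L q) (L r) = pi/2 - (hyp_angle (L p) (L q) (L r) + hyp_angle (L q) (L r) (L p))"
    unfolding hyp_area_def G by simp
  have ne: "p^2 + q^2 \<noteq> 0" using p by (simp add: add_pos_nonneg)
  show cA: "cos (hyp_area (L p) (L q) (L r)) = (1 - (p*q)^2)/(1+(p*q)^2)"
    unfolding area cos_diff sin_add cos_add using A' B area_cos[OF E_def _ ne _] rr E0 r
    unfolding E_def by (simp add: mult.commute)
  show sA: "sin (hyp_area (L p) (L q) (L r)) = 2*(p*q)/(1+(p*q)^2)"
    unfolding area sin_diff sin_add cos_add using A' B area_sin[OF E_def _ ne _] rr E0 r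
    unfolding E_def by (simp add: mult.commute)
  show "has_right_angle (L p) (L q) (L r)" unfolding has_right_angle_def G by simp
  have pr: "p < r"
  proof -
    have "p^2*(p^2*q^2) < 1 * q^2" using sq q p by (intro mult_strict_mono') auto
    hence "p^2 * (1 + p^2*q^2) < r^2 * (1 + p^2*q^2)" unfolding rr by (simp add: algebra_simps)
    hence "p^2 < r^2" using E0 unfolding E_def by simp
    thus ?thesis using p r by (simp add: power_less_imp_less_base)
  qed
  have qr: "q < r"
  proof -
    have "q^2*(q^2*p^2) < 1 * p^2" using sq q p by (intro mult_strict_mono') auto
    hence "q^2 * (1 + p^2*q^2) < r^2 * (1 + p^2*q^2)" unfolding rr by (simp add: algebra_simps)
    hence "q^2 < r^2" using E0 unfolding E_def by simp
    thus ?thesis using q r by (simp add: power_less_imp_less_base)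
  qed
  show "L p < L r" "L q < L r" using L_mono pr qr p q r by auto
  have tri: "L r < L p + L q"
  proof -
    have k1: "(p+q)^2*(1+p^2*q^2) - r^2*(1+p*q)^2*(1+p^2*q^2) = 2*(p*q)*((1-p^2)*(1-q^2))"
    proof -
      have "r^2*(1+p*q)^2*(1+p^2*q^2) = (r^2 * (1 + p^2*q^2))*(1+p*q)^2" by algebra
      hence "r^2*(1+p*q)^2*(1+p^2*q^2) = (p^2+q^2)*(1+p*q)^2" unfolding rr .
      moreover have "(p+q)^2*(1+p^2*q^2) - (p^2+q^2)*(1+p*q)^2 = 2*(p*q)*((1-p^2)*(1-q^2))" by algebra
      ultimately show ?thesis by linarith
    qed
    have "2*(p*q)*((1-p^2)*(1-q^2)) > 0" using p q sq by simp
    hence "r^2*(1+p*q)^2*(1+p^2*q^2) < (p+q)^2*(1+p^2*q^2)" using k1 by simp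
    hence "(r*(1+p*q))^2 < (p+q)^2" using E0 unfolding E_def by (simp add: power_mult_distrib)
    hence rl: "r*(1+p*q) < p+q" using p q r by (simp add: power_less_imp_less_base)
    have idd: "(1+p)*(1+q)*(1-r) - (1+r)*((1-p)*(1-q)) = 2*((p+q) - r*(1+p*q))" by algebra
    have "0 < 2*((p+q) - r*(1+p*q))" using rl by simp
    hence "(1+r)*((1-p)*(1-q)) < (1+p)*(1+q)*(1-r)" by (rule diff_pos[OF idd])
    hence "(1+r)/(1-r) < ((1+p)*(1+q))/((1-p)*(1-q))" using p q r by (intro frac_lt) (auto simp: mult_ac)
    hence "(1+r)/(1-r) < ((1+p)/(1-p))*((1+q)/(1-q))" by simp
    moreover have "0 < (1+r)/(1-r)" using r by simp
    moreover have "0 < ((1+p)/(1-p))*((1+q)/(1-q))" using p q by simp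
    ultimately have "ln ((1+r)/(1-r)) < ln (((1+p)/(1-p))*((1+q)/(1-q)))" by (simp only: ln_less_cancel_iff)
    moreover have "ln (((1+p)/(1-p))*((1+q)/(1-q))) = ln ((1+p)/(1-p)) + ln ((1+q)/(1-q))"
      using p q by (intro ln_mult_pos) auto
    ultimately show ?thesis unfolding L_def by linarith
  qed
  have pos: "L p > 0" "L q > 0" "L r > 0" using L_props p q r by auto
  have "hyp_triangle (L p) (L q) (L r)" unfolding hyp_triangle_def using pos pr qr tri
    \<open>L p < L r\<close> \<open>L q < L r\<close> by linarith
  moreover have "exp (L p) \<in> \<rat>" "exp (L q) \<in> \<rat>" "exp (L r) \<in> \<rat>" using L_props p q r Q by auto
  moreover have "gauss_rat (cis (hyp_angle (L p) (L q) (L r)))" unfolding gauss_rat_def using A' Q by (simp add: E_def)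
  moreover have "gauss_rat (cis (hyp_angle (L q) (L r) (L p)))" unfolding gauss_rat_def using B Q by (simp add: E_def)
  moreover have "gauss_rat (cis (hyp_angle (L r) (L p) (L q)))" unfolding gauss_rat_def G by simp
  moreover have "gauss_rat (cis (hyp_area (L p) (L q) (L r)))" unfolding gauss_rat_def using cA sA Q by simp
  ultimately show "hyp_heron (L p) (L q) (L r)" unfolding hyp_heron_def by blast
qed


context mset begin

lemma good_from_z:
  assumes z: "sqr z" "ksq (z + n)" "ksq (z - n)" "z < k^2"
  shows "\<exists>p q r. p \<in> \<rat> \<and> q \<in> \<rat> \<and> r \<in> \<rat> \<and> 0 < p \<and> p < 1 \<and> 0 < q \<and> q < 1 \<and> 0 < r \<and> r < 1 \<and>
     q \<le> p \<and> p*q = m \<and> r^2*(1+p^2*q^2) = p^2+q^2 \<and> r^2 = z/k^2"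
proof -
  obtain \<rho> where \<rho>: "\<rho> \<in> \<rat>" "z = \<rho>^2" using z(1) sqr_def by auto
  obtain u where u: "u \<in> \<rat>" "z + n = k*u^2" using z(2) ksq_def by auto
  obtain v where v: "v \<in> \<rat>" "z - n = k*v^2" using z(3) ksq_def by auto
  have kp: "k > 0" by (rule k_pos)
  have "k*v^2 \<ge> 0" using kp by simp
  hence zn: "z \<ge> n" using v by linarith
  have zp: "z > 0" using zn n_pos by simp
  define U where "U = \<bar>u\<bar>"
  define V where "V = \<bar>v\<bar>"
  have U2: "U^2 = (z+n)/k" unfolding U_def using u kp by simp
  have V2: "V^2 = (z-n)/k" unfolding V_def using v kp by simp
  have UV: "U^2 - V^2 = 4*m" unfolding U2 V2 using kp by (simp add: diff_divide_distrib[symmetric] n_def)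
  have U0: "U \<ge> 0" "V \<ge> 0" unfolding U_def V_def by auto
  define p where "p = (U+V)/2"
  define q where "q = (U-V)/2"
  define r where "r = \<bar>\<rho>\<bar>/k"
  have pq: "p*q = m" unfolding p_def q_def using UV by (simp add: algebra_simps power2_eq_square)
  have s: "p^2+q^2 = z/k"
  proof -
    have "p^2+q^2 = ((U+V)^2 + (U-V)^2)/4" unfolding p_def q_def power_divide by simp
    also have "(U+V)^2 + (U-V)^2 = 2*(U^2+V^2)" by algebra
    also have "2*(U^2+V^2)/4 = (U^2+V^2)/2" by simp
    also have "\<dots> = z/k" unfolding U2 V2 using kp by (simp add: field_simps)
    finally show ?thesis .
  qed
  have r2: "r^2 = z/k^2" unfolding r_def \<rho>(2) by (simp add: power_divide)
  have rr: "r^2*(1+p^2*q^2) = p^2+q^2"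
  proof -
    have "1+p^2*q^2 = k" unfolding k_def using pq by (simp add: power_mult_distrib[symmetric])
    thus ?thesis unfolding r2 s using kp by (simp add: power2_eq_square)
  qed
  have "U > V"
  proof -
    have "V^2 < U^2" using UV m0 by simp
    thus ?thesis using U0 by (simp add: power_less_imp_less_base)
  qed
  hence q0: "q > 0" "q \<le> p" unfolding q_def p_def using U0 by auto
  have p0: "p > 0" using q0 by simp
  have lt: "p^2 + q^2 < 1 + p^2*q^2"
  proof -
    have "z/k < k" using z(4) kp by (simp add: power2_eq_square divide_less_eq)
    moreover have "1 + p^2*q^2 = k" unfolding k_def using pq by (simp add: power_mult_distrib[symmetric])
    ultimately show ?thesis using s by simp
  qed
  have prod: "(p^2 - 1)*(1 - q^2) < 0"
  proof -
    have "(p^2 - 1)*(1 - q^2) = (p^2 + q^2) - (1 + p^2*q^2)" by algebra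
    thus ?thesis using lt by simp
  qed
  have p1: "p < 1"
  proof (rule ccontr)
    assume "\<not> p < 1"
    hence "p \<ge> 1" by simp
    hence "p^2 \<ge> 1" by (simp add: one_le_power)
    have "1 - q^2 < 0"
    proof (rule ccontr)
      assume "\<not> 1 - q^2 < 0"
      hence "(p^2 - 1)*(1 - q^2) \<ge> 0" using \<open>p^2 \<ge> 1\<close> by (intro mult_nonneg_nonneg) auto
      thus False using prod by simp
    qed
    hence "q^2 > 1" by simp
    have "q > 1"
    proof (rule ccontr)
      assume "\<not> q > 1"
      hence "q^2 \<le> 1" using q0 by (intro power_le_one) auto
      thus False using \<open>q^2 > 1\<close> by simp
    qed
    have "1*q \<le> p*q" using \<open>p \<ge> 1\<close> q0 by (intro mult_right_mono) auto
    hence "p*q > 1" using \<open>q > 1\<close> by linarith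
    thus False using pq m1 by simp
  qed
  have q1: "q < 1" using p1 q0 by simp
  have r0: "r > 0" unfolding r_def using zp \<rho>(2) kp by auto
  have r1: "r < 1"
  proof -
    have "r^2 < 1" unfolding r2 using z(4) kp by simp
    thus ?thesis using r0 by (simp add: power_less_one_iff abs_square_less_1)
  qed
  have Q: "p \<in> \<rat>" "q \<in> \<rat>" "r \<in> \<rat>" unfolding p_def q_def r_def U_def V_def using u v \<rho> kQ by auto
  show ?thesis using Q p0 p1 q0 q1 r0 r1 pq rr r2 by blast
qed

definition "G = {(p,q,r). p \<in> \<rat> \<and> q \<in> \<rat> \<and> r \<in> \<rat> \<and> 0 < p \<and> p < 1 \<and> 0 < q \<and> q < 1 \<and> 0 < r \<and> r < 1 \<and>
     q \<le> p \<and> p*q = m \<and> r^2*(1+p^2*q^2) = p^2+q^2}"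

lemma G_unb: assumes "r0 < 1" shows "\<exists>p q r. (p,q,r) \<in> G \<and> r > r0"
proof -
  define r1 where "r1 = max r0 0"
  have r1: "0 \<le> r1" "r1 < 1" "r0 \<le> r1" unfolding r1_def using assms by auto
  have "r1^2 < 1" using r1 by (simp add: power_less_one_iff abs_square_less_1)
  hence e: "k^2*(1 - r1^2) > 0" using k_pos by simp
  obtain z where zz: "k^2 - k^2*(1 - r1^2) < z" "z < k^2" "sqr z" "ksq (z + n)" "ksq (z - n)"
    using near[OF e] by blast
  obtain p q r where pqr: "p \<in> \<rat> \<and> q \<in> \<rat> \<and> r \<in> \<rat> \<and> 0 < p \<and> p < 1 \<and> 0 < q \<and> q < 1 \<and> 0 < r \<and> r < 1 \<and>
     q \<le> p \<and> p*q = m \<and> r^2*(1+p^2*q^2) = p^2+q^2 \<and> r^2 = z/k^2"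
    using good_from_z[OF zz(3) zz(4) zz(5) zz(2)] by blast
  have "r1^2 < r^2"
  proof -
    have "k^2 * r1^2 < z" using zz(1) by (simp add: algebra_simps)
    hence "r1^2 < z/k^2" using k_pos by (simp add: field_simps)
    thus ?thesis using pqr by simp
  qed
  moreover have "0 \<le> r" using pqr by simp
  ultimately have "r1 < r" by (rule power_less_imp_less_base)
  hence "r > r0" using r1 by simp
  thus ?thesis using pqr unfolding G_def by blast
qed

lemma G_inf: "infinite G"
proof
  assume fin: "finite G"
  define R where "R = (\<lambda>(p,q,r). r) ` G"
  have fR: "finite R" unfolding R_def using fin by simp
  obtain p q r where "(p,q,r) \<in> G" using G_unb[of 0] by auto
  hence ne: "R \<noteq> {}" unfolding R_def by auto
  have "Max R \<in> R" using fR ne by simp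
  hence "Max R < 1" unfolding R_def G_def by auto
  then obtain p q r where pqr: "(p,q,r) \<in> G" "r > Max R" using G_unb by blast
  have "r \<in> R" unfolding R_def using pqr by force
  hence "r \<le> Max R" using fR by simp
  thus False using pqr by simp
qed

definition "T = (\<lambda>(p,q,r). (L p, L q, L r)) ` G"

lemma L_inj: "-1 < s \<Longrightarrow> s < 1 \<Longrightarrow> -1 < t \<Longrightarrow> t < 1 \<Longrightarrow> L s = L t \<Longrightarrow> s = t"
  using L_mono by (metis linorder_neq_iff order.irrefl)

lemma T_inf: "infinite T"
proof -
  have "inj_on (\<lambda>(p,q,r). (L p, L q, L r)) G"
  proof (rule inj_onI)
    fix x y assume "x \<in> G" "y \<in> G" "(\<lambda>(p,q,r). (L p, L q, L r)) x = (\<lambda>(p,q,r). (L p, L q, L r)) y"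
    moreover obtain p q r where x: "x = (p,q,r)" by (cases x) auto
    moreover obtain p' q' r' where y: "y = (p',q',r')" by (cases y) auto
    ultimately have h: "L p = L p'" "L q = L q'" "L r = L r'" "0 < p" "p < 1" "0 < q" "q < 1" "0 < r" "r < 1"
      "0 < p'" "p' < 1" "0 < q'" "q' < 1" "0 < r'" "r' < 1" unfolding G_def by auto
    have "p = p'" using L_inj[OF _ _ _ _ h(1)] h by simp
    moreover have "q = q'" using L_inj[OF _ _ _ _ h(2)] h by simp
    moreover have "r = r'" using L_inj[OF _ _ _ _ h(3)] h by simp
    ultimately show "x = y" using x y by simp
  qed
  thus ?thesis unfolding T_def using G_inf finite_imageD by blast
qed

lemma T_props: assumes "(a,b,c) \<in> T"
  shows "hyp_heron a b c \<and> has_right_angle a b c \<and>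
        cos (hyp_area a b c) = (1 - m\<^sup>2) / (1 + m\<^sup>2) \<and>
        sin (hyp_area a b c) = 2 * m / (1 + m\<^sup>2) \<and> b \<le> a \<and> a < c"
proof -
  obtain p q r where G: "(p,q,r) \<in> G" and abc: "a = L p" "b = L q" "c = L r" using assms unfolding T_def by auto
  have h: "p \<in> \<rat>" "q \<in> \<rat>" "r \<in> \<rat>" "0 < p" "p < 1" "0 < q" "q < 1" "0 < r" "r < 1"
     "q \<le> p" "p*q = m" "r^2*(1+p^2*q^2) = p^2+q^2" using G unfolding G_def by auto
  note tm = tri_main[OF h(1-9) h(12)]
  have "b \<le> a" unfolding abc using L_mono h by (cases "q = p") (auto intro: less_imp_le)
  thus ?thesis using tm h(11) unfolding abc by simp
qed

end


theorem mainTheorem3: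
  fixes m :: real
  assumes "m \<in> \<rat>" and "0 < m" and "m < 1"
  shows "\<exists>S :: (real \<times> real \<times> real) set. infinite S \<and>
    (\<forall>(a, b, c) \<in> S. hyp_heron a b c \<and> has_right_angle a b c \<and>
        cos (hyp_area a b c) = (1 - m\<^sup>2) / (1 + m\<^sup>2) \<and>
        sin (hyp_area a b c) = 2 * m / (1 + m\<^sup>2)) \<and>
    (\<forall>t \<in> S. \<forall>u \<in> S. t \<noteq> u \<longrightarrow> \<not> hyp_congruent t u)"
proof -
  interpret mset m using assms by unfold_locales
  have nc: "\<not> hyp_congruent t u" if tu: "t \<in> T" "u \<in> T" "t \<noteq> u" for t u
  proof -
    obtain a b c where t: "t = (a,b,c)" by (cases t) auto
    obtain a' b' c' where u: "u = (a',b',c')" by (cases u) auto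
    have h1: "b \<le> a" "a < c" using T_props tu(1) t by auto
    have h2: "b' \<le> a'" "a' < c'" using T_props tu(2) u by auto
    show ?thesis unfolding t u hyp_congruent_def using h1 h2 tu(3) t u by auto
  qed
  show ?thesis
  proof (intro exI[of _ T] conjI)
    show "infinite T" by (rule T_inf)
    show "\<forall>(a, b, c) \<in> T. hyp_heron a b c \<and> has_right_angle a b c \<and>
        cos (hyp_area a b c) = (1 - m\<^sup>2) / (1 + m\<^sup>2) \<and>
        sin (hyp_area a b c) = 2 * m / (1 + m\<^sup>2)" using T_props by auto
    show "\<forall>t \<in> T. \<forall>u \<in> T. t \<noteq> u \<longrightarrow> \<not> hyp_congruent t u" using nc by blast
  qed
qed

end
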